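(* Let $\mathcal M=(M,<,+,0,\ldots)$ be a definably complete locally o-minimal expansion of an ordered group. Let $(G,d_G)$ be a definably compact definable metric group, $(X,d_X)$ a definable metric space, and suppose $G$ acts on $X$ by a definable continuous left action. Let $\pi:X\to Q$ be the canonical projection onto the definable quotient space $Q$ of $X$ by $G$. Then (1) $\pi$ is definably closed; and (2) $X$ is definably compact if and only if $Q$ is definably compact.
   Context: "Definable" means definable in $\mathcal M$ with parameters. $\mathcal M$ is an expansion of an ordered group with dense order without endpoints; locally o-minimal: for every definable $Y\subseteq M$ and $a\in M$ there is an open interval $I\ni a$ with $Y\cap I$ a finite union of points and open intervals; definably complete: every definable subset of $M$ has sup and inf in $M\cup\{\pm\infty\}$. A definable metric space $(X,d_X)$ is a definable set with a definable $d_X:X\times X\to\{a\ge0\}$ satisfying $d_X(x,y)=0\iff x=y$, symmetry and triangle inequality, topologized by the balls. A definable metric group is a definable metric space whose underlying set is a definable group with multiplication and inversion continuous. A definable topological space (definable set, topology with definable open base) is definably compact if every definable filtered family (any two members contain a common member) of nonempty closed subsets has nonempty intersection. The definable quotient is a definable topological space $(Q,\tau_Q)$ with definable continuous $\pi:X\to Q$ such that every definable continuous map from $X$ to a definable topological space constant on $G$-orbits factors as $\psi\circ\pi$ with $\psi$ definable continuous (concretely: $Q$ a definable set meeting each orbit in one point, $\pi(x)$ the point of $Q$ in $Gx$, and $S\subseteq Q$ open iff $\pi^{-1}(S)$ open). A definable map is definably closed if it maps definable closed sets to closed sets. *)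

theory Defs
  imports Main "HOL-Algebra.Group"
begin

text \<open>Points of M^n are lists of length n.  A first-order expansion of
(M,<,+,0) is represented by the collection D of all its definable-with-parameters
sets: D n is the family of definable subsets of M^n.  The closure conditions are
those of van den Dries' notion of a structure on M, plus the requirement that all
singletons (parameters), the order and the graph of addition are definable.\<close>

definition tuples :: "nat \<Rightarrow> 'm list set" where
  "tuples n = {xs. length xs = n}"

definition expansion_of_ogroup ::
  "(nat \<Rightarrow> ('m::{linordered_ab_group_add, dense_linorder, no_top, no_bot}) list set set) \<Rightarrow> bool" where
  "expansion_of_ogroup D \<longleftrightarrow>
     (\<forall>n. \<forall>A\<in>D n. A \<subseteq> tuples n) \<and>
     (\<forall>n. tuples n \<in> D n) \<and>
     (\<forall>n. \<forall>A\<in>D n. \<forall>B\<in>D n. A \<inter> B \<in> D n \<and> tuples n - A \<in> D n) \<and>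
     (\<forall>n. \<forall>A\<in>D n. {x # xs | x xs. xs \<in> A} \<in> D (Suc n) \<and> {xs @ [x] | xs x. xs \<in> A} \<in> D (Suc n)) \<and>
     (\<forall>n. {xs \<in> tuples n. hd xs = last xs} \<in> D n) \<and>
     (\<forall>n. \<forall>A\<in>D (Suc n). butlast ` A \<in> D n) \<and>
     (\<forall>a. {[a]} \<in> D 1) \<and>
     {[x, y] | x y. x < y} \<in> D 2 \<and>
     {[x, y, x + y] | x y. True} \<in> D 3"

definition set1 :: "'m list set \<Rightarrow> 'm set" where
  "set1 Y = {x. [x] \<in> Y}"

definition locally_o_minimal :: "(nat \<Rightarrow> ('m::linorder) list set set) \<Rightarrow> bool" where
  "locally_o_minimal D \<longleftrightarrow>
     (\<forall>Y\<in>D 1. \<forall>a. \<exists>b c. b < a \<and> a < c \<and>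
        (\<exists>P J. finite P \<and> finite J \<and>
           set1 Y \<inter> {b<..<c} = P \<union> (\<Union>(u, v)\<in>J. {u<..<v})))"

definition definably_complete :: "(nat \<Rightarrow> ('m::linorder) list set set) \<Rightarrow> bool" where
  "definably_complete D \<longleftrightarrow>
     (\<forall>Y\<in>D 1.
        (set1 Y \<noteq> {} \<and> (\<exists>b. \<forall>y\<in>set1 Y. y \<le> b) \<longrightarrow>
           (\<exists>s. (\<forall>y\<in>set1 Y. y \<le> s) \<and> (\<forall>b. (\<forall>y\<in>set1 Y. y \<le> b) \<longrightarrow> s \<le> b))) \<and>
        (set1 Y \<noteq> {} \<and> (\<exists>b. \<forall>y\<in>set1 Y. b \<le> y) \<longrightarrow>
           (\<exists>s. (\<forall>y\<in>set1 Y. s \<le> y) \<and> (\<forall>b. (\<forall>y\<in>set1 Y. b \<le> y) \<longrightarrow> b \<le> s))))"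

definition definable_map ::
  "(nat \<Rightarrow> 'm list set set) \<Rightarrow> nat \<Rightarrow> nat \<Rightarrow> 'm list set \<Rightarrow> ('m list \<Rightarrow> 'm list) \<Rightarrow> bool" where
  "definable_map D n m X f \<longleftrightarrow>
     X \<in> D n \<and> (\<forall>x\<in>X. length (f x) = m) \<and> {x @ f x | x. x \<in> X} \<in> D (n + m)"

definition definable_map2 ::
  "(nat \<Rightarrow> 'm list set set) \<Rightarrow> nat \<Rightarrow> nat \<Rightarrow> nat \<Rightarrow> 'm list set \<Rightarrow> 'm list set
     \<Rightarrow> ('m list \<Rightarrow> 'm list \<Rightarrow> 'm list) \<Rightarrow> bool" where
  "definable_map2 D n m k A B f \<longleftrightarrow>
     A \<in> D n \<and> B \<in> D m \<and> (\<forall>x\<in>A. \<forall>y\<in>B. length (f x y) = k) \<and>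
     {x @ y @ f x y | x y. x \<in> A \<and> y \<in> B} \<in> D (n + m + k)"

definition definable_metric ::
  "(nat \<Rightarrow> ('m::linordered_ab_group_add) list set set) \<Rightarrow> nat \<Rightarrow> 'm list set
     \<Rightarrow> ('m list \<Rightarrow> 'm list \<Rightarrow> 'm) \<Rightarrow> bool" where
  "definable_metric D n X d \<longleftrightarrow>
     X \<in> D n \<and> {x @ y @ [d x y] | x y. x \<in> X \<and> y \<in> X} \<in> D (n + n + 1) \<and>
     (\<forall>x\<in>X. \<forall>y\<in>X. 0 \<le> d x y \<and> (d x y = 0 \<longleftrightarrow> x = y) \<and> d x y = d y x \<and>
        (\<forall>z\<in>X. d x z \<le> d x y + d y z))"

definition metric_open ::
  "'m list set \<Rightarrow> ('m list \<Rightarrow> 'm list \<Rightarrow> 'm::linordered_ab_group_add) \<Rightarrow> 'm list set \<Rightarrow> bool" where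
  "metric_open X d U \<longleftrightarrow> U \<subseteq> X \<and> (\<forall>x\<in>U. \<exists>e>0. {y\<in>X. d x y < e} \<subseteq> U)"

text \<open>Definable families: a definable F in M^(k+n) gives the family of fibres
F_t = {x. t @ x \<in> F} indexed by the (definable) set of t in M^k with nonempty fibre.\<close>
definition fam_index :: "nat \<Rightarrow> 'm list set \<Rightarrow> 'm list set" where
  "fam_index k F = {t. length t = k \<and> (\<exists>x. t @ x \<in> F)}"

definition fam_fibre :: "nat \<Rightarrow> 'm list set \<Rightarrow> 'm list \<Rightarrow> 'm list set" where
  "fam_fibre n F t = {x. length x = n \<and> t @ x \<in> F}"

definition definably_compact ::
  "(nat \<Rightarrow> 'm list set set) \<Rightarrow> nat \<Rightarrow> 'm list set \<Rightarrow> ('m list set \<Rightarrow> bool) \<Rightarrow> bool" where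
  "definably_compact D n S opn \<longleftrightarrow>
     (\<forall>k. \<forall>F\<in>D (k + n).
        fam_index k F \<noteq> {} \<and>
        (\<forall>t\<in>fam_index k F. fam_fibre n F t \<subseteq> S \<and> opn (S - fam_fibre n F t)) \<and>
        (\<forall>t1\<in>fam_index k F. \<forall>t2\<in>fam_index k F. \<exists>t3\<in>fam_index k F.
            fam_fibre n F t3 \<subseteq> fam_fibre n F t1 \<inter> fam_fibre n F t2)
        \<longrightarrow> (\<Inter>t\<in>fam_index k F. fam_fibre n F t) \<noteq> {})"

definition definable_open_base ::
  "(nat \<Rightarrow> 'm list set set) \<Rightarrow> nat \<Rightarrow> 'm list set \<Rightarrow> ('m list set \<Rightarrow> bool) \<Rightarrow> bool" where
  "definable_open_base D n S opn \<longleftrightarrow>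
     (\<exists>k. \<exists>B\<in>D (k + n).
        (\<forall>t\<in>fam_index k B. fam_fibre n B t \<subseteq> S \<and> opn (fam_fibre n B t)) \<and>
        (\<forall>U. opn U \<longrightarrow> (\<forall>x\<in>U. \<exists>t\<in>fam_index k B. x \<in> fam_fibre n B t \<and> fam_fibre n B t \<subseteq> U)))"

definition definable_metric_group ::
  "(nat \<Rightarrow> ('m::linordered_ab_group_add) list set set) \<Rightarrow> nat \<Rightarrow> 'm list monoid
     \<Rightarrow> ('m list \<Rightarrow> 'm list \<Rightarrow> 'm) \<Rightarrow> bool" where
  "definable_metric_group D p G dG \<longleftrightarrow>
     group G \<and> definable_metric D p (carrier G) dG \<and>
     definable_map2 D p p p (carrier G) (carrier G) (\<lambda>g h. g \<otimes>\<^bsub>G\<^esub> h) \<and>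
     definable_map D p p (carrier G) (\<lambda>g. inv\<^bsub>G\<^esub> g) \<and>
     (\<forall>g\<in>carrier G. \<forall>h\<in>carrier G. \<forall>e>0. \<exists>\<delta>>0. \<forall>g'\<in>carrier G. \<forall>h'\<in>carrier G.
        dG g g' < \<delta> \<and> dG h h' < \<delta> \<longrightarrow> dG (g \<otimes>\<^bsub>G\<^esub> h) (g' \<otimes>\<^bsub>G\<^esub> h') < e) \<and>
     (\<forall>g\<in>carrier G. \<forall>e>0. \<exists>\<delta>>0. \<forall>g'\<in>carrier G.
        dG g g' < \<delta> \<longrightarrow> dG (inv\<^bsub>G\<^esub> g) (inv\<^bsub>G\<^esub> g') < e)"

definition definable_continuous_action ::
  "(nat \<Rightarrow> ('m::linordered_ab_group_add) list set set) \<Rightarrow> nat \<Rightarrow> nat \<Rightarrow> 'm list monoid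
     \<Rightarrow> ('m list \<Rightarrow> 'm list \<Rightarrow> 'm) \<Rightarrow> 'm list set \<Rightarrow> ('m list \<Rightarrow> 'm list \<Rightarrow> 'm)
     \<Rightarrow> ('m list \<Rightarrow> 'm list \<Rightarrow> 'm list) \<Rightarrow> bool" where
  "definable_continuous_action D p n G dG X dX act \<longleftrightarrow>
     definable_map2 D p n n (carrier G) X act \<and>
     (\<forall>g\<in>carrier G. \<forall>x\<in>X. act g x \<in> X) \<and>
     (\<forall>x\<in>X. act \<one>\<^bsub>G\<^esub> x = x) \<and>
     (\<forall>g\<in>carrier G. \<forall>h\<in>carrier G. \<forall>x\<in>X. act (g \<otimes>\<^bsub>G\<^esub> h) x = act g (act h x)) \<and>
     (\<forall>g\<in>carrier G. \<forall>x\<in>X. \<forall>e>0. \<exists>\<delta>>0. \<forall>g'\<in>carrier G. \<forall>x'\<in>X.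
        dG g g' < \<delta> \<and> dX x x' < \<delta> \<longrightarrow> dX (act g x) (act g' x') < e)"

definition orbit :: "'m list monoid \<Rightarrow> ('m list \<Rightarrow> 'm list \<Rightarrow> 'm list) \<Rightarrow> 'm list \<Rightarrow> 'm list set" where
  "orbit G act x = {act g x | g. g \<in> carrier G}"

definition quotient_open ::
  "'m list set \<Rightarrow> ('m list \<Rightarrow> 'm list \<Rightarrow> 'm::linordered_ab_group_add) \<Rightarrow> 'm list set
     \<Rightarrow> ('m list \<Rightarrow> 'm list) \<Rightarrow> 'm list set \<Rightarrow> bool" where
  "quotient_open X dX Q pi S \<longleftrightarrow> S \<subseteq> Q \<and> metric_open X dX {x\<in>X. pi x \<in> S}"

text \<open>(Q, pi) is the definable quotient of X by the action: Q a definable set of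
representatives meeting each orbit in exactly one point, pi x the point of Q in
the orbit of x, quotient topology, and the quotient is a definable topological space.\<close>
definition definable_quotient ::
  "(nat \<Rightarrow> ('m::linordered_ab_group_add) list set set) \<Rightarrow> nat \<Rightarrow> 'm list monoid
     \<Rightarrow> 'm list set \<Rightarrow> ('m list \<Rightarrow> 'm list \<Rightarrow> 'm) \<Rightarrow> ('m list \<Rightarrow> 'm list \<Rightarrow> 'm list)
     \<Rightarrow> 'm list set \<Rightarrow> ('m list \<Rightarrow> 'm list) \<Rightarrow> bool" where
  "definable_quotient D n G X dX act Q pi \<longleftrightarrow>
     Q \<in> D n \<and> Q \<subseteq> X \<and>
     (\<forall>x\<in>X. \<exists>!q. q \<in> Q \<and> q \<in> orbit G act x) \<and>
     (\<forall>x\<in>X. pi x \<in> Q \<and> pi x \<in> orbit G act x) \<and>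
     definable_open_base D n Q (quotient_open X dX Q pi)"

end

theory Submission
  imports Defs
begin

definition defn :: "(nat \<Rightarrow> 'm list set set) \<Rightarrow> nat \<Rightarrow> ('m list \<Rightarrow> bool) \<Rightarrow> bool" where
  "defn D m P \<longleftrightarrow> {y. length y = m \<and> P y} \<in> D m"

locale EOG =
  fixes D :: "nat \<Rightarrow> ('m::{linordered_ab_group_add, dense_linorder, no_top, no_bot}) list set set"
  assumes E: "expansion_of_ogroup D"
begin

lemma E1: "\<forall>n. \<forall>A\<in>D n. A \<subseteq> tuples n"
  using E unfolding expansion_of_ogroup_def by (elim conjE) assumption
lemma E2: "\<forall>n. tuples n \<in> D n"
  using E unfolding expansion_of_ogroup_def by (elim conjE) assumption
lemma E3: "\<forall>n. \<forall>A\<in>D n. \<forall>B\<in>D n. A \<inter> B \<in> D n \<and> tuples n - A \<in> D n"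
  using E unfolding expansion_of_ogroup_def by (elim conjE) assumption
lemma E4: "\<forall>n. \<forall>A\<in>D n. {x # xs | x xs. xs \<in> A} \<in> D (Suc n) \<and> {xs @ [x] | xs x. xs \<in> A} \<in> D (Suc n)"
  using E unfolding expansion_of_ogroup_def by (elim conjE) assumption
lemma E5: "\<forall>n. {xs \<in> tuples n. hd xs = last xs} \<in> D n"
  using E unfolding expansion_of_ogroup_def by (elim conjE) assumption
lemma E6: "\<forall>n. \<forall>A\<in>D (Suc n). butlast ` A \<in> D n"
  using E unfolding expansion_of_ogroup_def by (elim conjE) assumption
lemma E7: "\<forall>a. {[a]} \<in> D 1"
  using E unfolding expansion_of_ogroup_def by (elim conjE) assumption
lemma E8: "{[x, y] | x y. x < y} \<in> D 2"
  using E unfolding expansion_of_ogroup_def by (elim conjE) assumption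

lemma D_sub: "A \<in> D n \<Longrightarrow> y \<in> A \<Longrightarrow> length y = n"
  using E1 unfolding tuples_def by blast
lemma E_int: "A \<in> D n \<Longrightarrow> B \<in> D n \<Longrightarrow> A \<inter> B \<in> D n"
  using E3 by blast
lemma E_diff: "A \<in> D n \<Longrightarrow> tuples n - A \<in> D n"
  using E3 by blast
lemma E_tup: "tuples n \<in> D n"
  using E2 by blast
lemma E_cons: "A \<in> D n \<Longrightarrow> {x # xs | x xs. xs \<in> A} \<in> D (Suc n)"
  using E4 by blast
lemma E_snoc: "A \<in> D n \<Longrightarrow> {xs @ [x] | xs x. xs \<in> A} \<in> D (Suc n)"
  using E4 by blast
lemma E_butlast: "A \<in> D (Suc n) \<Longrightarrow> butlast ` A \<in> D n"
  using E6 by blast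

lemma defn_set: "A \<in> D n \<Longrightarrow> defn D n (\<lambda>y. y \<in> A)"
proof -
  assume a: "A \<in> D n"
  have "{y. length y = n \<and> y \<in> A} = A" using D_sub[OF a] by auto
  then show ?thesis using a unfolding defn_def by simp
qed

lemma defn_cong: "defn D m P \<Longrightarrow> (\<And>y. length y = m \<Longrightarrow> P y = Q y) \<Longrightarrow> defn D m Q"
proof -
  assume a: "defn D m P" and b: "\<And>y. length y = m \<Longrightarrow> P y = Q y"
  have "{y. length y = m \<and> P y} = {y. length y = m \<and> Q y}" using b by auto
  then show ?thesis using a unfolding defn_def by simp
qed

lemma defn_dim: "defn D m P \<Longrightarrow> m = m' \<Longrightarrow> defn D m' P" by simp

lemma defn_and: "defn D m P \<Longrightarrow> defn D m Q \<Longrightarrow> defn D m (\<lambda>y. P y \<and> Q y)"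
proof -
  assume a: "defn D m P" "defn D m Q"
  have eq: "{y. length y = m \<and> P y \<and> Q y} = {y. length y = m \<and> P y} \<inter> {y. length y = m \<and> Q y}" by auto
  show ?thesis unfolding defn_def eq using a[unfolded defn_def] by (rule E_int)
qed

lemma defn_not: "defn D m P \<Longrightarrow> defn D m (\<lambda>y. \<not> P y)"
proof -
  assume a: "defn D m P"
  have eq: "{y. length y = m \<and> \<not> P y} = tuples m - {y. length y = m \<and> P y}" by (auto simp: tuples_def)
  show ?thesis unfolding defn_def eq using a[unfolded defn_def] by (rule E_diff)
qed

lemma defn_True: "defn D m (\<lambda>y. True)"
  using E_tup unfolding defn_def tuples_def by simp

lemma defn_or: "defn D m P \<Longrightarrow> defn D m Q \<Longrightarrow> defn D m (\<lambda>y. P y \<or> Q y)"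
proof -
  assume a: "defn D m P" "defn D m Q"
  have "defn D m (\<lambda>y. \<not> (\<not> P y \<and> \<not> Q y))"
    by (rule defn_not, rule defn_and; rule defn_not, fact)
  then show ?thesis by (rule defn_cong) simp
qed

lemma defn_imp: "defn D m P \<Longrightarrow> defn D m Q \<Longrightarrow> defn D m (\<lambda>y. P y \<longrightarrow> Q y)"
proof -
  assume a: "defn D m P" "defn D m Q"
  have "defn D m (\<lambda>y. \<not> P y \<or> Q y)"
    by (rule defn_or, rule defn_not, fact, fact)
  then show ?thesis by (rule defn_cong) simp
qed

lemma cylR1: "defn D n P \<Longrightarrow> defn D (Suc n) (\<lambda>y. P (butlast y))"
proof -
  assume a: "defn D n P"
  have eqs_E_snoc: "{xs @ [x] | xs x. xs \<in> {y. length y = n \<and> P y}} = {y. length y = Suc n \<and> P (butlast y)}"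
  proof (rule equalityI; rule subsetI)
    fix y assume "y \<in> {y. length y = Suc n \<and> P (butlast y)}"
    then show "y \<in> {xs @ [x] | xs x. xs \<in> {y. length y = n \<and> P y}}"
      by (cases y rule: rev_cases) auto
  qed auto
  show ?thesis unfolding defn_def eqs_E_snoc[symmetric] using a[unfolded defn_def] by (rule E_snoc)
qed

lemma cylL1: "defn D n P \<Longrightarrow> defn D (Suc n) (\<lambda>y. P (tl y))"
proof -
  assume a: "defn D n P"
  have eqs_E_cons: "{x # xs | x xs. xs \<in> {y. length y = n \<and> P y}} = {y. length y = Suc n \<and> P (tl y)}"
  proof (rule equalityI; rule subsetI)
    fix y assume "y \<in> {y. length y = Suc n \<and> P (tl y)}"
    then show "y \<in> {x # xs | x xs. xs \<in> {y. length y = n \<and> P y}}"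
      by (cases y) auto
  qed auto
  show ?thesis unfolding defn_def eqs_E_cons[symmetric] using a[unfolded defn_def] by (rule E_cons)
qed

lemma cylR: "defn D n P \<Longrightarrow> defn D (n + k) (\<lambda>y. P (take n y))"
proof (induction k)
  case 0
  then show ?case by (rule defn_cong[OF defn_dim]) auto
next
  case (Suc k)
  have "defn D (Suc (n + k)) (\<lambda>y. P (take n (butlast y)))" using cylR1[OF Suc.IH[OF Suc.prems]] .
  then show ?case by (rule defn_cong[OF defn_dim]) (auto simp: butlast_conv_take min_def)
qed

lemma cylL: "defn D n P \<Longrightarrow> defn D (k + n) (\<lambda>y. P (drop k y))"
proof (induction k)
  case 0
  then show ?case by (rule defn_cong[OF defn_dim]) auto
next
  case (Suc k)
  have "defn D (Suc (k + n)) (\<lambda>y. P (drop k (tl y)))" using cylL1[OF Suc.IH[OF Suc.prems]] .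
  then show ?case by (rule defn_cong[OF defn_dim]) (auto simp: drop_Suc)
qed

lemma ex1: "defn D (Suc m) P \<Longrightarrow> defn D m (\<lambda>y. \<exists>x. P (y @ [x]))"
proof -
  assume a: "defn D (Suc m) P"
  have eqs_E_butlast: "butlast ` {y. length y = Suc m \<and> P y} = {y. length y = m \<and> (\<exists>x. P (y @ [x]))}"
  proof (rule equalityI; rule subsetI)
    fix y assume "y \<in> {y. length y = m \<and> (\<exists>x. P (y @ [x]))}"
    then obtain x where "length y = m" "P (y @ [x])" by blast
    then show "y \<in> butlast ` {y. length y = Suc m \<and> P y}"
      by (intro image_eqI[of _ _ "y @ [x]"]) auto
  next
    fix y assume "y \<in> butlast ` {y. length y = Suc m \<and> P y}"
    then obtain w where w: "y = butlast w" "length w = Suc m" "P w" by blast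
    then have "w = butlast w @ [last w]" by (cases w rule: rev_cases) auto
    then have "P (y @ [last w])" using w by simp
    then show "y \<in> {y. length y = m \<and> (\<exists>x. P (y @ [x]))}" using w by auto
  qed
  show ?thesis unfolding defn_def eqs_E_butlast[symmetric] using a[unfolded defn_def] by (rule E_butlast)
qed

lemma ex: "defn D (m + k) P \<Longrightarrow> defn D m (\<lambda>y. \<exists>z. length z = k \<and> P (y @ z))"
proof (induction k arbitrary: P)
  case 0
  then show ?case by (rule defn_cong[OF defn_dim]) auto
next
  case (Suc k)
  have "defn D (Suc (m + k)) P" using Suc.prems by simp
  from Suc.IH[OF ex1[OF this]]
  have "defn D m (\<lambda>y. \<exists>z. length z = k \<and> (\<exists>x. P ((y @ z) @ [x])))" .
  then show ?case
  proof (rule defn_cong)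
    fix y :: "'m list"
    show "(\<exists>z. length z = k \<and> (\<exists>x. P ((y @ z) @ [x]))) = (\<exists>z. length z = Suc k \<and> P (y @ z))"
    proof
      assume "\<exists>z. length z = k \<and> (\<exists>x. P ((y @ z) @ [x]))"
      then obtain z x where "length z = k" "P ((y @ z) @ [x])" by blast
      then show "\<exists>z. length z = Suc k \<and> P (y @ z)" by (intro exI[of _ "z @ [x]"]) simp
    next
      assume "\<exists>z. length z = Suc k \<and> P (y @ z)"
      then obtain z where z: "length z = Suc k" "P (y @ z)" by blast
      then have zz: "z = butlast z @ [last z]" by (cases z rule: rev_cases) auto
      have "P ((y @ butlast z) @ [last z])" using z(2) zz by (metis append_assoc)
      then show "\<exists>z. length z = k \<and> (\<exists>x. P ((y @ z) @ [x]))" using z(1)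
        by (intro exI[of _ "butlast z"]) auto
    qed
  qed
qed

lemma diag: "i \<le> j \<Longrightarrow> j < m \<Longrightarrow> defn D m (\<lambda>y. y ! i = y ! j)"
proof -
  assume ij: "i \<le> j" "j < m"
  have "{xs \<in> tuples (j - i + 1). hd xs = last xs} \<in> D (j - i + 1)"
    using E5 by blast
  then have "defn D (j - i + 1) (\<lambda>xs. hd xs = last xs)"
    unfolding defn_def tuples_def by simp
  from cylR[OF cylL[OF this, of i], of "m - j - 1"]
  have "defn D (i + (j - i + 1) + (m - j - 1)) (\<lambda>y. hd (drop i (take (i + (j - i + 1)) y)) = last (drop i (take (i + (j - i + 1)) y)))" .
  then show ?thesis
  proof (rule defn_cong[OF defn_dim])
    show "i + (j - i + 1) + (m - j - 1) = m" using ij by simp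
    fix y :: "'m list" assume ly: "length y = m"
    have e: "i + (j - i + 1) = Suc j" using ij by simp
    have "hd (drop i (take (Suc j) y)) = y ! i" using ij ly
      by (simp add: hd_drop_conv_nth)
    moreover have "last (drop i (take (Suc j) y)) = y ! j" using ij ly
      by (cases "m = Suc j") (auto simp add: last_conv_nth min_def)
    ultimately show "(hd (drop i (take (i + (j - i + 1)) y)) = last (drop i (take (i + (j - i + 1)) y))) = (y ! i = y ! j)"
      unfolding e by simp
  qed
qed

lemma eqidx: "i < m \<Longrightarrow> j < m \<Longrightarrow> defn D m (\<lambda>y. y ! i = y ! j)"
proof (cases "i \<le> j")
  case True
  assume "i < m" "j < m" then show ?thesis using diag True by blast
next
  case False
  assume "i < m" "j < m"
  then have "defn D m (\<lambda>y. y ! j = y ! i)" using diag False by simp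
  then show ?thesis by (rule defn_cong) auto
qed

lemma eqs: "(\<forall>l<(k::nat). f l < N \<and> g l < N) \<Longrightarrow> defn D N (\<lambda>y. \<forall>l<k. y ! (f l) = y ! (g l))"
proof (induction k)
  case 0
  then show ?case using defn_True by simp
next
  case (Suc k)
  have "defn D N (\<lambda>y. (\<forall>l<k. y ! (f l) = y ! (g l)) \<and> y ! (f k) = y ! (g k))"
    using Suc by (intro defn_and eqidx) auto
  then show ?case by (rule defn_cong) (auto simp: less_Suc_eq)
qed

lemma sel: "defn D (length ix) P \<Longrightarrow> (\<forall>i\<in>set ix. i < m) \<Longrightarrow> defn D m (\<lambda>y. P (map ((!) y) ix))"
proof -
  assume P: "defn D (length ix) P" and im: "\<forall>i\<in>set ix. i < m"
  define k where "k = length ix"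
  have a: "defn D (m + k) (\<lambda>w. P (drop m w))" using cylL[OF P] k_def by simp
  have b: "defn D (m + k) (\<lambda>w. \<forall>l<k. w ! (m + l) = w ! (ix ! l))"
    using im k_def nth_mem by (intro eqs) fastforce
  from ex[OF defn_and[OF a b]]
  have "defn D m (\<lambda>y. \<exists>z. length z = k \<and> P (drop m (y @ z)) \<and> (\<forall>l<k. (y @ z) ! (m + l) = (y @ z) ! (ix ! l)))" .
  then show ?thesis
  proof (rule defn_cong)
    fix y :: "'m list" assume ly: "length y = m"
    have "(\<exists>z. length z = k \<and> P (drop m (y @ z)) \<and> (\<forall>l<k. (y @ z) ! (m + l) = (y @ z) ! (ix ! l)))
       = (\<exists>z. length z = k \<and> P z \<and> (\<forall>l<k. z ! l = y ! (ix ! l)))"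
      using ly im k_def by (auto simp: nth_append nth_mem)
    also have "\<dots> = P (map ((!) y) ix)"
    proof
      assume "\<exists>z. length z = k \<and> P z \<and> (\<forall>l<k. z ! l = y ! (ix ! l))"
      then obtain z where z: "length z = k" "P z" "\<forall>l<k. z ! l = y ! (ix ! l)" by blast
      have "z = map ((!) y) ix" using z k_def by (intro nth_equalityI) auto
      then show "P (map ((!) y) ix)" using z by simp
    next
      assume "P (map ((!) y) ix)"
      then show "\<exists>z. length z = k \<and> P z \<and> (\<forall>l<k. z ! l = y ! (ix ! l))"
        using k_def by (intro exI[of _ "map ((!) y) ix"]) auto
    qed
    finally show "(\<exists>z. length z = k \<and> P (drop m (y @ z)) \<and> (\<forall>l<k. (y @ z) ! (m + l) = (y @ z) ! (ix ! l)))
       = P (map ((!) y) ix)" .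
  qed
qed

lemma map_nth_upt: "a + k \<le> length y \<Longrightarrow> map ((!) y) [a..<a+k] = take k (drop a y)"
  by (rule nth_equalityI) auto

lemma blk1: "defn D k P \<Longrightarrow> a + k \<le> m \<Longrightarrow> defn D m (\<lambda>y. P (take k (drop a y)))"
proof -
  assume P: "defn D k P" and a: "a + k \<le> m"
  have "defn D m (\<lambda>y. P (map ((!) y) [a..<a+k]))" using a by (intro sel) (auto intro: defn_dim[OF P])
  then show ?thesis by (rule defn_cong) (use a in \<open>simp add: map_nth_upt\<close>)
qed

lemma blk2: "defn D (k1 + k2) P \<Longrightarrow> a1 + k1 \<le> m \<Longrightarrow> a2 + k2 \<le> m \<Longrightarrow>
   defn D m (\<lambda>y. P (take k1 (drop a1 y) @ take k2 (drop a2 y)))"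
proof -
  assume P: "defn D (k1 + k2) P" and a: "a1 + k1 \<le> m" "a2 + k2 \<le> m"
  have "defn D m (\<lambda>y. P (map ((!) y) ([a1..<a1+k1] @ [a2..<a2+k2])))" using a
    by (intro sel) (auto intro: defn_dim[OF P])
  then show ?thesis by (rule defn_cong) (use a in \<open>simp add: map_nth_upt\<close>)
qed

lemma blk3: "defn D (k1 + k2 + k3) P \<Longrightarrow> a1 + k1 \<le> m \<Longrightarrow> a2 + k2 \<le> m \<Longrightarrow> a3 + k3 \<le> m \<Longrightarrow>
   defn D m (\<lambda>y. P (take k1 (drop a1 y) @ take k2 (drop a2 y) @ take k3 (drop a3 y)))"
proof -
  assume P: "defn D (k1 + k2 + k3) P" and a: "a1 + k1 \<le> m" "a2 + k2 \<le> m" "a3 + k3 \<le> m"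
  have "defn D m (\<lambda>y. P (map ((!) y) ([a1..<a1+k1] @ [a2..<a2+k2] @ [a3..<a3+k3])))" using a
    by (intro sel) (auto intro: defn_dim[OF P])
  then show ?thesis by (rule defn_cong) (use a in \<open>simp add: map_nth_upt\<close>)
qed

lemma less_atom: "i < m \<Longrightarrow> j < m \<Longrightarrow> defn D m (\<lambda>y. y ! i < y ! j)"
proof -
  assume ij: "i < m" "j < m"
  have "{[x, y] | x y. x < y} \<in> D 2" using E8 .
  moreover have "{[x, y] | x y. (x::'m) < y} = {z. length z = 2 \<and> z ! 0 < z ! 1}"
  proof (rule equalityI; rule subsetI)
    fix z :: "'m list" assume "z \<in> {z. length z = 2 \<and> z ! 0 < z ! 1}"
    then obtain a b where "z = [a, b]" "a < b"
      by (cases z; cases "tl z"; auto)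
    then show "z \<in> {[x, y] | x y. (x::'m) < y}" by blast
  qed auto
  ultimately have "defn D (length [i, j]) (\<lambda>z. z ! 0 < z ! 1)" unfolding defn_def by (simp add: numeral_2_eq_2)
  from sel[OF this] ij show ?thesis by simp
qed

lemma const_atom: "i < m \<Longrightarrow> defn D m (\<lambda>y. y ! i = a)"
proof -
  assume i: "i < m"
  have "{[a]} \<in> D 1" using E7 by blast
  moreover have "{[a]} = {z. length z = 1 \<and> z ! 0 = a}"
    by (auto simp: length_Suc_conv)
  ultimately have "defn D (length [i]) (\<lambda>z. z ! 0 = a)" unfolding defn_def by simp
  from sel[OF this] i show ?thesis by simp
qed

lemma consts_atom: "(\<forall>l<(k::nat). f l < m) \<Longrightarrow> defn D m (\<lambda>y. \<forall>l<k. y ! (f l) = c l)"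
proof (induction k)
  case 0
  then show ?case using defn_True by simp
next
  case (Suc k)
  have "defn D m (\<lambda>y. (\<forall>l<k. y ! (f l) = c l) \<and> y ! (f k) = c k)"
    using Suc by (intro defn_and const_atom) auto
  then show ?case by (rule defn_cong) (auto simp: less_Suc_eq)
qed

lemma blk_const: "a + k \<le> m \<Longrightarrow> length c = k \<Longrightarrow> defn D m (\<lambda>y. take k (drop a y) = c)"
proof -
  assume a: "a + k \<le> m" "length c = k"
  have "defn D m (\<lambda>y. \<forall>l<k. y ! (a + l) = c ! l)" using a by (intro consts_atom) auto
  then show ?thesis
  proof (rule defn_cong)
    fix y :: "'m list" assume "length y = m"
    then show "(\<forall>l<k. y ! (a + l) = c ! l) = (take k (drop a y) = c)"
      using a by (auto simp: list_eq_iff_nth_eq)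
  qed
qed

lemma less_const: "i < m \<Longrightarrow> defn D m (\<lambda>y. a < y ! i)"
proof -
  assume i: "i < m"
  have "defn D (m + 1) (\<lambda>y. y ! m = a \<and> y ! m < y ! i)"
    using i by (intro defn_and const_atom less_atom) auto
  from ex[OF this] have "defn D m (\<lambda>y. \<exists>z. length z = 1 \<and> (y @ z) ! m = a \<and> (y @ z) ! m < (y @ z) ! i)" .
  then show ?thesis
  proof (rule defn_cong)
    fix y :: "'m list" assume "length y = m"
    then show "(\<exists>z. length z = 1 \<and> (y @ z) ! m = a \<and> (y @ z) ! m < (y @ z) ! i) = (a < y ! i)"
      using i by (auto simp: nth_append length_Suc_conv)
  qed
qed

lemma param: "defn D (k + m) P \<Longrightarrow> length c = k \<Longrightarrow> defn D m (\<lambda>y. P (c @ y))"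
proof -
  assume P: "defn D (k + m) P" and c: "length c = k"
  have "defn D (m + k) (\<lambda>v. take k (drop m v) = c \<and> P (take k (drop m v) @ take m (drop 0 v)))"
    using c by (intro defn_and blk_const blk2 P) auto
  from ex[OF this] show ?thesis
  proof (rule defn_cong)
    fix y :: "'m list" assume "length y = m"
    then show "(\<exists>z. length z = k \<and> take k (drop m (y @ z)) = c \<and> P (take k (drop m (y @ z)) @ take m (drop 0 (y @ z))))
       = P (c @ y)" using c by auto
  qed
qed

lemma graph_mem:
  assumes A: "\<And>x. x \<in> A \<Longrightarrow> length x = k1" and B: "\<And>y. y \<in> B \<Longrightarrow> length y = k2"
    and la: "length a = k1" and lb: "length b = k2"
  shows "(a @ b @ c \<in> {x @ y @ f x y | x y. x \<in> A \<and> y \<in> B}) = (a \<in> A \<and> b \<in> B \<and> c = f a b)"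
proof
  assume "a @ b @ c \<in> {x @ y @ f x y | x y. x \<in> A \<and> y \<in> B}"
  then obtain x y where xy: "a @ b @ c = x @ y @ f x y" "x \<in> A" "y \<in> B" by blast
  have "a = x" "b @ c = y @ f x y" using xy A[OF xy(2)] la by (auto simp: append_eq_append_conv)
  moreover then have "b = y" "c = f x y" using B[OF xy(3)] lb by (auto simp: append_eq_append_conv)
  ultimately show "a \<in> A \<and> b \<in> B \<and> c = f a b" using xy by simp
qed auto

end

lemma ex_len1: "(\<exists>z. length z = 1 \<and> P z) \<longleftrightarrow> (\<exists>a. P [a])"
proof
  assume "\<exists>z. length z = 1 \<and> P z"
  then obtain z where "length z = 1" "P z" by blast
  then show "\<exists>a. P [a]" by (cases z) auto
qed force

lemma fam_fibre_R: "fam_fibre nn {w. length w = k + nn \<and> R (take k w) (drop k w)} t = {x. length x = nn \<and> length t = k \<and> R t x}"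
  by (auto simp: fam_fibre_def)
lemma fam_index_R: "fam_index k {w. length w = k + nn \<and> R (take k w) (drop k w)} = {t. length t = k \<and> (\<exists>x. length x = nn \<and> R t x)}"
  by (auto simp: fam_index_def)

locale setting = EOG D
  for D :: "nat \<Rightarrow> ('m::{linordered_ab_group_add, dense_linorder, no_top, no_bot}) list set set" +
  fixes G :: "'m list monoid" and dG :: "'m list \<Rightarrow> 'm list \<Rightarrow> 'm"
    and X :: "'m list set" and dX :: "'m list \<Rightarrow> 'm list \<Rightarrow> 'm"
    and act :: "'m list \<Rightarrow> 'm list \<Rightarrow> 'm list"
    and Q :: "'m list set" and pi :: "'m list \<Rightarrow> 'm list"
    and p n :: nat
  assumes grp: "definable_metric_group D p G dG"
    and Gc: "definably_compact D p (carrier G) (metric_open (carrier G) dG)"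
    and mX: "definable_metric D n X dX"
    and ac: "definable_continuous_action D p n G dG X dX act"
    and qu: "definable_quotient D n G X dX act Q pi"
begin

lemma G_group: "group G"
  using grp unfolding definable_metric_group_def by (elim conjE) assumption
lemma mG: "definable_metric D p (carrier G) dG"
  using grp unfolding definable_metric_group_def by (elim conjE) assumption
lemma inv_cont: "\<forall>g\<in>carrier G. \<forall>e>0. \<exists>\<delta>>0. \<forall>g'\<in>carrier G.
        dG g g' < \<delta> \<longrightarrow> dG (inv\<^bsub>G\<^esub> g) (inv\<^bsub>G\<^esub> g') < e"
  using grp unfolding definable_metric_group_def by (elim conjE) assumption

lemma GG_D: "carrier G \<in> D p"
  using mG unfolding definable_metric_def by (elim conjE) assumption
lemma GdG_D: "{x @ y @ [dG x y] | x y. x \<in> carrier G \<and> y \<in> carrier G} \<in> D (p + p + 1)"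
  using mG unfolding definable_metric_def by (elim conjE) assumption
lemma dG_ax: "\<forall>x\<in>carrier G. \<forall>y\<in>carrier G. 0 \<le> dG x y \<and> (dG x y = 0 \<longleftrightarrow> x = y) \<and> dG x y = dG y x \<and>
        (\<forall>z\<in>carrier G. dG x z \<le> dG x y + dG y z)"
  using mG unfolding definable_metric_def by (elim conjE) assumption

lemma X_D: "X \<in> D n"
  using mX unfolding definable_metric_def by (elim conjE) assumption
lemma GdX_D: "{x @ y @ [dX x y] | x y. x \<in> X \<and> y \<in> X} \<in> D (n + n + 1)"
  using mX unfolding definable_metric_def by (elim conjE) assumption
lemma dX_ax: "\<forall>x\<in>X. \<forall>y\<in>X. 0 \<le> dX x y \<and> (dX x y = 0 \<longleftrightarrow> x = y) \<and> dX x y = dX y x \<and>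
        (\<forall>z\<in>X. dX x z \<le> dX x y + dX y z)"
  using mX unfolding definable_metric_def by (elim conjE) assumption

lemma act_map2: "definable_map2 D p n n (carrier G) X act"
  using ac unfolding definable_continuous_action_def by (elim conjE) assumption
lemma Ga_D: "{x @ y @ act x y | x y. x \<in> carrier G \<and> y \<in> X} \<in> D (p + n + n)"
  using act_map2 unfolding definable_map2_def by (elim conjE) assumption
lemma act_closed0: "\<forall>g\<in>carrier G. \<forall>x\<in>X. act g x \<in> X"
  using ac unfolding definable_continuous_action_def by (elim conjE) assumption
lemma act_one0: "\<forall>x\<in>X. act \<one>\<^bsub>G\<^esub> x = x"
  using ac unfolding definable_continuous_action_def by (elim conjE) assumption
lemma act_mult0: "\<forall>g\<in>carrier G. \<forall>h\<in>carrier G. \<forall>x\<in>X. act (g \<otimes>\<^bsub>G\<^esub> h) x = act g (act h x)"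
  using ac unfolding definable_continuous_action_def by (elim conjE) assumption
lemma act_closed: "g \<in> carrier G \<Longrightarrow> x \<in> X \<Longrightarrow> act g x \<in> X"
  using act_closed0 by blast
lemma act_one: "x \<in> X \<Longrightarrow> act \<one>\<^bsub>G\<^esub> x = x"
  using act_one0 by blast
lemma act_mult: "g \<in> carrier G \<Longrightarrow> h \<in> carrier G \<Longrightarrow> x \<in> X \<Longrightarrow> act (g \<otimes>\<^bsub>G\<^esub> h) x = act g (act h x)"
  using act_mult0 by blast
lemma act_cont: "\<forall>g\<in>carrier G. \<forall>x\<in>X. \<forall>e>0. \<exists>\<delta>>0. \<forall>g'\<in>carrier G. \<forall>x'\<in>X.
        dG g g' < \<delta> \<and> dX x x' < \<delta> \<longrightarrow> dX (act g x) (act g' x') < e"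
  using ac unfolding definable_continuous_action_def by (elim conjE) assumption

lemma Q_D: "Q \<in> D n"
  using qu unfolding definable_quotient_def by (elim conjE) assumption
lemma Q_X: "Q \<subseteq> X"
  using qu unfolding definable_quotient_def by (elim conjE) assumption
lemma Q_uniq: "\<forall>x\<in>X. \<exists>!q. q \<in> Q \<and> q \<in> orbit G act x"
  using qu unfolding definable_quotient_def by (elim conjE) assumption
lemma pi_prop: "\<forall>x\<in>X. pi x \<in> Q \<and> pi x \<in> orbit G act x"
  using qu unfolding definable_quotient_def by (elim conjE) assumption

lemma lenX: "x \<in> X \<Longrightarrow> length x = n" using D_sub[OF X_D] .
lemma lenG: "g \<in> carrier G \<Longrightarrow> length g = p" using D_sub[OF GG_D] .
lemma lenC: "C \<in> D n \<Longrightarrow> x \<in> C \<Longrightarrow> length x = n" using D_sub .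

lemma act_inv: "g \<in> carrier G \<Longrightarrow> x \<in> X \<Longrightarrow> act (inv\<^bsub>G\<^esub> g) (act g x) = x"
  using act_mult[of "inv\<^bsub>G\<^esub> g" g x] act_one[of x] G_group by (simp add: group.l_inv group.inv_closed)
lemma act_inv2: "g \<in> carrier G \<Longrightarrow> x \<in> X \<Longrightarrow> act g (act (inv\<^bsub>G\<^esub> g) x) = x"
  using act_mult[of g "inv\<^bsub>G\<^esub> g" x] act_one[of x] G_group by (simp add: group.r_inv group.inv_closed)

lemma orbit_uniq: "x \<in> X \<Longrightarrow> a \<in> Q \<Longrightarrow> a \<in> orbit G act x \<Longrightarrow> b \<in> Q \<Longrightarrow> b \<in> orbit G act x \<Longrightarrow> a = b"
proof -
  assume x: "x \<in> X" and ab: "a \<in> Q" "a \<in> orbit G act x" "b \<in> Q" "b \<in> orbit G act x"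
  have "\<exists>!q. q \<in> Q \<and> q \<in> orbit G act x" using Q_uniq x by (rule bspec)
  then obtain q0 where "\<forall>y. y \<in> Q \<and> y \<in> orbit G act x \<longrightarrow> y = q0" by (auto simp: Ex1_def)
  then show "a = b" using ab by blast
qed

lemma pi_char: "x \<in> X \<Longrightarrow> (pi x = q) \<longleftrightarrow> (q \<in> Q \<and> (\<exists>g\<in>carrier G. act g x = q))"
proof
  assume x: "x \<in> X" and "pi x = q"
  moreover have "pi x \<in> Q \<and> pi x \<in> orbit G act x" using pi_prop x by (rule bspec)
  ultimately show "q \<in> Q \<and> (\<exists>g\<in>carrier G. act g x = q)" unfolding orbit_def by auto
next
  assume x: "x \<in> X" and q: "q \<in> Q \<and> (\<exists>g\<in>carrier G. act g x = q)"
  then have "q \<in> orbit G act x" unfolding orbit_def by auto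
  moreover have "pi x \<in> Q \<and> pi x \<in> orbit G act x" using pi_prop x by (rule bspec)
  ultimately show "pi x = q" using orbit_uniq[OF x] q by blast
qed

lemma pi_orb: "x \<in> X \<Longrightarrow> \<exists>a\<in>carrier G. pi x = act a x"
proof -
  assume x: "x \<in> X"
  have "pi x \<in> Q \<and> pi x \<in> orbit G act x" using pi_prop x by (rule bspec)
  then show ?thesis unfolding orbit_def by auto
qed

lemma Gm: "a \<in> carrier G \<Longrightarrow> b \<in> carrier G \<Longrightarrow> a \<otimes>\<^bsub>G\<^esub> b \<in> carrier G"
  by (rule monoid.m_closed[OF group.is_monoid[OF G_group]])
lemma Gi: "a \<in> carrier G \<Longrightarrow> inv\<^bsub>G\<^esub> a \<in> carrier G"
  by (rule group.inv_closed[OF G_group])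
lemma G1: "\<one>\<^bsub>G\<^esub> \<in> carrier G"
  by (rule monoid.one_closed[OF group.is_monoid[OF G_group]])

lemma pi_eq: "x \<in> X \<Longrightarrow> y \<in> X \<Longrightarrow> (pi x = pi y) \<longleftrightarrow> (\<exists>g\<in>carrier G. y = act g x)"
proof
  assume x: "x \<in> X" and y: "y \<in> X" and e: "pi x = pi y"
  obtain a where a: "a \<in> carrier G" "pi x = act a x" using pi_orb[OF x] by blast
  obtain b where b: "b \<in> carrier G" "pi y = act b y" using pi_orb[OF y] by blast
  have "y = act (inv\<^bsub>G\<^esub> b) (act b y)" using act_inv[OF b(1) y] by simp
  also have "\<dots> = act (inv\<^bsub>G\<^esub> b) (act a x)" using a b e by simp
  also have "\<dots> = act (inv\<^bsub>G\<^esub> b \<otimes>\<^bsub>G\<^esub> a) x" using act_mult[OF Gi[OF b(1)] a(1) x] by simp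
  finally show "\<exists>g\<in>carrier G. y = act g x" using Gm[OF Gi[OF b(1)] a(1)] by blast
next
  assume x: "x \<in> X" and y: "y \<in> X" and "\<exists>g\<in>carrier G. y = act g x"
  then obtain g where g: "g \<in> carrier G" "y = act g x" by blast
  obtain b where b: "b \<in> carrier G" "pi y = act b y" using pi_orb[OF y] by blast
  have "pi y = act (b \<otimes>\<^bsub>G\<^esub> g) x" using b g act_mult[OF b(1) g(1) x] by simp
  moreover have "pi y \<in> Q" using pi_prop y by blast
  ultimately show "pi x = pi y" using pi_char[OF x, of "pi y"] Gm[OF b(1) g(1)] by auto
qed

lemma pi_Q: "q \<in> Q \<Longrightarrow> pi q = q"
proof -
  assume q: "q \<in> Q"
  then have "q \<in> X" using Q_X by blast
  then have "act \<one>\<^bsub>G\<^esub> q = q" by (rule act_one)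
  then have "\<exists>g\<in>carrier G. act g q = q" using G1 by blast
  then show ?thesis using pi_char[OF \<open>q \<in> X\<close>, of q] q by simp
qed

lemma pi_in_Q: "x \<in> X \<Longrightarrow> pi x \<in> Q" using pi_prop by blast

lemma GdX_mem: "length a = n \<Longrightarrow> length b = n \<Longrightarrow>
   (a @ b @ c \<in> {x @ y @ [dX x y] | x y. x \<in> X \<and> y \<in> X}) = (a \<in> X \<and> b \<in> X \<and> c = [dX a b])"
  using graph_mem[of X n X n a b c "\<lambda>x y. [dX x y]"] lenX by simp
lemma GdG_mem: "length a = p \<Longrightarrow> length b = p \<Longrightarrow>
   (a @ b @ c \<in> {x @ y @ [dG x y] | x y. x \<in> carrier G \<and> y \<in> carrier G}) = (a \<in> carrier G \<and> b \<in> carrier G \<and> c = [dG a b])"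
  using graph_mem[of "carrier G" p "carrier G" p a b c "\<lambda>x y. [dG x y]"] lenG by simp
lemma Ga_mem: "length a = p \<Longrightarrow> length b = n \<Longrightarrow>
   (a @ b @ c \<in> {x @ y @ act x y | x y. x \<in> carrier G \<and> y \<in> X}) = (a \<in> carrier G \<and> b \<in> X \<and> c = act a b)"
  using graph_mem[of "carrier G" p X n a b c act] lenX lenG by simp

lemma defn_cong2: "defn D m P \<Longrightarrow> (\<forall>y. length y = m \<longrightarrow> P y = R y) \<Longrightarrow> defn D m R"
  using defn_cong by blast

lemma K_defn:
  assumes x: "x \<in> X" and C: "C \<in> D n" and C_sub: "C \<subseteq> X"
  shows "defn D (1 + p) (\<lambda>w. drop 1 w \<in> carrier G \<and> (\<forall>\<delta>. 0 < \<delta> \<longrightarrow>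
     (\<exists>g'\<in>carrier G. dG (drop 1 w) g' < \<delta> \<and> (\<exists>c\<in>C. dX x (act g' c) < w ! 0))))"
proof -
  let ?GdG = "{x @ y @ [dG x y] | x y. x \<in> carrier G \<and> y \<in> carrier G}"
  let ?GdX = "{x @ y @ [dX x y] | x y. x \<in> X \<and> y \<in> X}"
  let ?Ga = "{x @ y @ act x y | x y. x \<in> carrier G \<and> y \<in> X}"
  define AT where "AT = (\<lambda>v.
      (take p (drop 1 v) @ take p (drop (2+p) v) @ take 1 (drop (2+2*p) v) \<in> ?GdG) \<and>
      v ! (2+2*p) < v ! (1+p) \<and>
      take n (drop (3+2*p) v) \<in> C \<and>
      (take p (drop (2+p) v) @ take n (drop (3+2*p) v) @ take n (drop (3+2*p+n) v) \<in> ?Ga) \<and>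
      (x @ (take n (drop (3+2*p+n) v) @ take 1 (drop (3+2*p+2*n) v)) \<in> ?GdX) \<and>
      v ! (3+2*p+2*n) < v ! 0)"
  have a1: "defn D (1+p+1+p+1+n+n+1) (\<lambda>v. take p (drop 1 v) @ take p (drop (2+p) v) @ take 1 (drop (2+2*p) v) \<in> ?GdG)"
    by (rule blk3[OF defn_set[OF GdG_D]]) simp_all
  have a2: "defn D (1+p+1+p+1+n+n+1) (\<lambda>v. v ! (2+2*p) < v ! (1+p))"
    by (rule less_atom) simp_all
  have a3: "defn D (1+p+1+p+1+n+n+1) (\<lambda>v. take n (drop (3+2*p) v) \<in> C)"
    by (rule blk1[OF defn_set[OF C]]) simp
  have a4: "defn D (1+p+1+p+1+n+n+1) (\<lambda>v. take p (drop (2+p) v) @ take n (drop (3+2*p) v) @ take n (drop (3+2*p+n) v) \<in> ?Ga)"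
    by (rule blk3[OF defn_set[OF Ga_D]]) simp_all
  have px: "defn D (n+1) (\<lambda>z. x @ z \<in> ?GdX)"
    using param[of n "n+1" "\<lambda>z. z \<in> ?GdX" x] defn_set[OF GdX_D] lenX[OF x] by (simp add: add.assoc)
  have a5: "defn D (1+p+1+p+1+n+n+1) (\<lambda>v. x @ (take n (drop (3+2*p+n) v) @ take 1 (drop (3+2*p+2*n) v)) \<in> ?GdX)"
    by (rule blk2[OF px]) simp_all
  have a6: "defn D (1+p+1+p+1+n+n+1) (\<lambda>v. v ! (3+2*p+2*n) < v ! 0)"
    by (rule less_atom) simp_all
  have A: "defn D (1+p+1+p+1+n+n+1) AT"
    unfolding AT_def by (intro defn_and a1 a2 a3 a4 a5 a6)
  note B = ex[OF ex[OF ex[OF ex[OF ex[OF A]]]]]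
  have lt: "1+p < 1+p+1" by simp
  note B2 = defn_imp[OF less_const[of "1+p" "1+p+1" 0, OF lt] B]
  note C3 = defn_not[OF ex[OF defn_not[OF B2]]]
  have G1: "defn D (1+p) (\<lambda>w. take p (drop 1 w) \<in> carrier G)"
    by (rule blk1[OF defn_set[OF GG_D]]) simp
  note F = defn_and[OF G1 C3]
  have AT_eval: "AT ((((((w @ z) @ za) @ zb) @ zc) @ zd) @ ze) =
     ((drop 1 w @ za @ zb \<in> ?GdG) \<and> zb ! 0 < z ! 0 \<and> zc \<in> C \<and> (za @ zc @ zd \<in> ?Ga) \<and>
      (x @ zd @ ze \<in> ?GdX) \<and> ze ! 0 < w ! 0)"
    if l: "length w = 1+p" "length z = 1" "length za = p" "length zb = 1" "length zc = n" "length zd = n" "length ze = 1"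
    for w z za zb zc zd ze :: "'m list"
  proof -
    have "take p (drop 1 ((((((w @ z) @ za) @ zb) @ zc) @ zd) @ ze)) = drop 1 w"
      "take p (drop (2+p) ((((((w @ z) @ za) @ zb) @ zc) @ zd) @ ze)) = za"
      "take 1 (drop (2+2*p) ((((((w @ z) @ za) @ zb) @ zc) @ zd) @ ze)) = zb"
      "((((((w @ z) @ za) @ zb) @ zc) @ zd) @ ze) ! (2+2*p) = zb ! 0"
      "((((((w @ z) @ za) @ zb) @ zc) @ zd) @ ze) ! (1+p) = z ! 0"
      "take n (drop (3+2*p) ((((((w @ z) @ za) @ zb) @ zc) @ zd) @ ze)) = zc"
      "take n (drop (3+2*p+n) ((((((w @ z) @ za) @ zb) @ zc) @ zd) @ ze)) = zd"
      "take 1 (drop (3+2*p+2*n) ((((((w @ z) @ za) @ zb) @ zc) @ zd) @ ze)) = ze"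
      "((((((w @ z) @ za) @ zb) @ zc) @ zd) @ ze) ! (3+2*p+2*n) = ze ! 0"
      "((((((w @ z) @ za) @ zb) @ zc) @ zd) @ ze) ! 0 = w ! 0"
      using l by (simp_all add: nth_append)
    then show ?thesis unfolding AT_def by (simp only:)
  qed
  have inner: "(\<exists>za. length za = p \<and> (\<exists>zb. length zb = 1 \<and> (\<exists>zc. length zc = n \<and> (\<exists>zd. length zd = n \<and>
       (\<exists>ze. length ze = 1 \<and> AT ((((((w @ z) @ za) @ zb) @ zc) @ zd) @ ze))))))
     = (\<exists>g'\<in>carrier G. dG (drop 1 w) g' < z ! 0 \<and> (\<exists>c\<in>C. dX x (act g' c) < w ! 0))"
    if l: "length w = 1+p" "length z = 1" and wG: "drop 1 w \<in> carrier G" for w z :: "'m list"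
  proof
    assume "\<exists>za. length za = p \<and> (\<exists>zb. length zb = 1 \<and> (\<exists>zc. length zc = n \<and> (\<exists>zd. length zd = n \<and>
       (\<exists>ze. length ze = 1 \<and> AT ((((((w @ z) @ za) @ zb) @ zc) @ zd) @ ze)))))"
    then obtain za zb zc zd ze where lz: "length za = p" "length zb = 1" "length zc = n" "length zd = n" "length ze = 1"
      and at: "AT ((((((w @ z) @ za) @ zb) @ zc) @ zd) @ ze)" by blast
    have ld: "length (drop 1 w) = p" using l by simp
    have e: "(drop 1 w @ za @ zb \<in> ?GdG) \<and> zb ! 0 < z ! 0 \<and> zc \<in> C \<and> (za @ zc @ zd \<in> ?Ga) \<and>
      (x @ zd @ ze \<in> ?GdX) \<and> ze ! 0 < w ! 0" using at AT_eval[OF l lz] by simp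
    then have "za \<in> carrier G" "zb = [dG (drop 1 w) za]" "zc \<in> C" "zd = act za zc" "ze = [dX x zd]"
      using GdG_mem[OF ld lz(1)] Ga_mem[OF lz(1) lz(3)] GdX_mem[OF lenX[OF x] lz(4)] by auto
    then show "\<exists>g'\<in>carrier G. dG (drop 1 w) g' < z ! 0 \<and> (\<exists>c\<in>C. dX x (act g' c) < w ! 0)"
      using e by auto
  next
    assume "\<exists>g'\<in>carrier G. dG (drop 1 w) g' < z ! 0 \<and> (\<exists>c\<in>C. dX x (act g' c) < w ! 0)"
    then obtain g' c where g': "g' \<in> carrier G" "dG (drop 1 w) g' < z ! 0" "c \<in> C" "dX x (act g' c) < w ! 0" by blast
    have cX: "c \<in> X" using g'(3) C_sub by blast
    have ld: "length (drop 1 w) = p" using l by simp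
    let ?za = g' and ?zb = "[dG (drop 1 w) g']" and ?zc = c and ?zd = "act g' c" and ?ze = "[dX x (act g' c)]"
    have lz: "length ?za = p" "length ?zb = 1" "length ?zc = n" "length ?zd = n" "length ?ze = 1"
      using lenG[OF g'(1)] lenX[OF cX] lenX[OF act_closed[OF g'(1) cX]] by simp_all
    have m1: "drop 1 w @ ?za @ ?zb \<in> ?GdG"
      by (subst GdG_mem[OF ld lz(1)]) (use g' wG in simp)
    have m2: "?za @ ?zc @ ?zd \<in> ?Ga"
      by (subst Ga_mem[OF lz(1) lz(3)]) (use g' cX in simp)
    have m3: "x @ ?zd @ ?ze \<in> ?GdX"
      by (subst GdX_mem[OF lenX[OF x] lz(4)]) (use x act_closed[OF g'(1) cX] in simp)
    have "AT ((((((w @ z) @ ?za) @ ?zb) @ ?zc) @ ?zd) @ ?ze)"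
      unfolding AT_eval[OF l lz]
      by (intro conjI m1 m2 m3) (use g' in simp_all)
    then show "\<exists>za. length za = p \<and> (\<exists>zb. length zb = 1 \<and> (\<exists>zc. length zc = n \<and> (\<exists>zd. length zd = n \<and>
       (\<exists>ze. length ze = 1 \<and> AT ((((((w @ z) @ za) @ zb) @ zc) @ zd) @ ze)))))"
      using lz by blast
  qed
  show ?thesis
  proof (rule defn_cong2[OF F], intro allI impI)
    fix w :: "'m list" assume lw: "length w = 1 + p"
    have tw: "take p (drop 1 w) = drop 1 w" using lw by simp
    have nth: "(w @ z) ! (1 + p) = z ! 0" for z :: "'m list" using lw by (simp add: nth_append)
    show "(take p (drop 1 w) \<in> carrier G \<and>
          \<not> (\<exists>z. length z = 1 \<and> \<not> (0 < (w @ z) ! (1 + p) \<longrightarrow>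
            (\<exists>za. length za = p \<and> (\<exists>zb. length zb = 1 \<and> (\<exists>zc. length zc = n \<and> (\<exists>zd. length zd = n \<and>
       (\<exists>ze. length ze = 1 \<and> AT ((((((w @ z) @ za) @ zb) @ zc) @ zd) @ ze)))))))))
      = (drop 1 w \<in> carrier G \<and> (\<forall>\<delta>. 0 < \<delta> \<longrightarrow>
         (\<exists>g'\<in>carrier G. dG (drop 1 w) g' < \<delta> \<and> (\<exists>c\<in>C. dX x (act g' c) < w ! 0))))"
    proof (cases "drop 1 w \<in> carrier G")
      case False
      then show ?thesis using tw by simp
    next
      case True
      have "(\<exists>z. length z = 1 \<and> \<not> (0 < (w @ z) ! (1 + p) \<longrightarrow>
            (\<exists>za. length za = p \<and> (\<exists>zb. length zb = 1 \<and> (\<exists>zc. length zc = n \<and> (\<exists>zd. length zd = n \<and>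
       (\<exists>ze. length ze = 1 \<and> AT ((((((w @ z) @ za) @ zb) @ zc) @ zd) @ ze))))))))
        = (\<exists>z. length z = 1 \<and> \<not> (0 < z ! 0 \<longrightarrow>
            (\<exists>g'\<in>carrier G. dG (drop 1 w) g' < z ! 0 \<and> (\<exists>c\<in>C. dX x (act g' c) < w ! 0))))"
        using inner[OF lw _ True] nth by (metis (no_types, lifting))
      also have "\<dots> = (\<exists>\<delta>. \<not> (0 < \<delta> \<longrightarrow>
            (\<exists>g'\<in>carrier G. dG (drop 1 w) g' < \<delta> \<and> (\<exists>c\<in>C. dX x (act g' c) < w ! 0))))"
        by (subst ex_len1) simp
      finally show ?thesis using tw True by auto
    qed
  qed
qed

lemma dG_tri: "x \<in> carrier G \<Longrightarrow> y \<in> carrier G \<Longrightarrow> z \<in> carrier G \<Longrightarrow> dG x z \<le> dG x y + dG y z"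
  using dG_ax by blast
lemma dG_0: "x \<in> carrier G \<Longrightarrow> dG x x = 0"
  using dG_ax by blast
lemma dX_nn: "x \<in> X \<Longrightarrow> y \<in> X \<Longrightarrow> 0 \<le> dX x y"
  using dX_ax by blast

lemma K_closed:
  "metric_open (carrier G) dG (carrier G - {g. g \<in> carrier G \<and> (\<forall>\<delta>>0. \<exists>g'\<in>carrier G. dG g g' < \<delta> \<and> (\<exists>c\<in>C. dX x (act g' c) < e))})"
  (is "metric_open _ _ (_ - ?K)")
  unfolding metric_open_def
proof (intro conjI ballI)
  show "carrier G - ?K \<subseteq> carrier G" by blast
  fix g assume g: "g \<in> carrier G - ?K"
  then obtain \<delta> where d: "\<delta> > 0" "\<not> (\<exists>g'\<in>carrier G. dG g g' < \<delta> \<and> (\<exists>c\<in>C. dX x (act g' c) < e))" by blast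
  obtain \<delta>1 where d1: "0 < \<delta>1" "\<delta>1 < \<delta>" using dense[OF d(1)] by blast
  show "\<exists>e>0. {y \<in> carrier G. dG g y < e} \<subseteq> carrier G - ?K"
  proof (intro exI conjI subsetI)
    show "0 < \<delta>1" by fact
    fix h assume h: "h \<in> {y \<in> carrier G. dG g y < \<delta>1}"
    show "h \<in> carrier G - ?K"
    proof
      show "h \<in> carrier G" using h by blast
      show "h \<notin> ?K"
      proof
        assume "h \<in> ?K"
        moreover have "0 < \<delta> - \<delta>1" using d1 by simp
        ultimately obtain g' c where gc: "g' \<in> carrier G" "dG h g' < \<delta> - \<delta>1" "c \<in> C" "dX x (act g' c) < e" by blast
        have "dG g g' \<le> dG g h + dG h g'" using dG_tri g h gc by blast
        also have "\<dots> < \<delta>1 + (\<delta> - \<delta>1)" using h gc by (intro add_strict_mono) auto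
        finally have "dG g g' < \<delta>" by simp
        then show False using d(2) gc by blast
      qed
    qed
  qed
qed

lemma part1:
  assumes C: "C \<in> D n" and CX: "C \<subseteq> X" and Co: "metric_open X dX (X - C)"
  shows "quotient_open X dX Q pi (Q - pi ` C)"
  unfolding quotient_open_def metric_open_def
proof (intro conjI ballI)
  show "Q - pi ` C \<subseteq> Q" by blast
  show "{x \<in> X. pi x \<in> Q - pi ` C} \<subseteq> X" by blast
  fix x assume "x \<in> {x \<in> X. pi x \<in> Q - pi ` C}"
  then have x: "x \<in> X" and npc: "pi x \<notin> pi ` C" by auto
  show "\<exists>e>0. {y \<in> X. dX x y < e} \<subseteq> {x \<in> X. pi x \<in> Q - pi ` C}"
  proof (rule ccontr)
    assume na: "\<not> (\<exists>e>0. {y \<in> X. dX x y < e} \<subseteq> {x \<in> X. pi x \<in> Q - pi ` C})"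
    have close: "\<exists>g\<in>carrier G. \<exists>c\<in>C. dX x (act g c) < e" if e: "0 < e" for e
    proof -
      from na e obtain y where y: "y \<in> X" "dX x y < e" "pi y \<notin> Q - pi ` C" by blast
      then have "pi y \<in> pi ` C" using pi_in_Q[OF y(1)] by blast
      then obtain c where c: "c \<in> C" "pi y = pi c" by blast
      then have "\<exists>g\<in>carrier G. y = act g c" using pi_eq[of c y] CX y by auto
      then show ?thesis using c y by blast
    qed
    define K where "K = (\<lambda>e. {g. g \<in> carrier G \<and> (\<forall>\<delta>>0. \<exists>g'\<in>carrier G. dG g g' < \<delta> \<and> (\<exists>c\<in>C. dX x (act g' c) < e))})"
    have Kne: "\<exists>g. g \<in> K e" if e: "0 < e" for e
    proof -
      obtain g c where gc: "g \<in> carrier G" "c \<in> C" "dX x (act g c) < e" using close[OF e] by blast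
      have "\<forall>\<delta>>0. \<exists>g'\<in>carrier G. dG g g' < \<delta> \<and> (\<exists>c\<in>C. dX x (act g' c) < e)"
        using gc dG_0[OF gc(1)] by (metis)
      then have "g \<in> K e" unfolding K_def using gc by blast
      then show ?thesis by blast
    qed
    have KG: "K e \<subseteq> carrier G" for e unfolding K_def by blast
    have Kmono: "K e \<subseteq> K e'" if "e \<le> e'" for e e'
      unfolding K_def using that by (auto intro: less_le_trans) (meson less_le_trans)
    define S where "S = {w. length w = 1 + p \<and> (\<lambda>t g. g \<in> K (hd t)) (take 1 w) (drop 1 w)}"
    have SD: "S \<in> D (1 + p)"
    proof -
      have "defn D (1 + p) (\<lambda>w. drop 1 w \<in> carrier G \<and> (\<forall>\<delta>. 0 < \<delta> \<longrightarrow>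
         (\<exists>g'\<in>carrier G. dG (drop 1 w) g' < \<delta> \<and> (\<exists>c\<in>C. dX x (act g' c) < w ! 0))))"
        by (rule K_defn[OF x C CX])
      then have "defn D (1 + p) (\<lambda>w. (\<lambda>t g. g \<in> K (hd t)) (take 1 w) (drop 1 w))"
      proof (rule defn_cong)
        fix w :: "'m list" assume "length w = 1 + p"
        then obtain a u where w: "w = a # u" by (cases w) auto
        show "(drop 1 w \<in> carrier G \<and> (\<forall>\<delta>. 0 < \<delta> \<longrightarrow>
         (\<exists>g'\<in>carrier G. dG (drop 1 w) g' < \<delta> \<and> (\<exists>c\<in>C. dX x (act g' c) < w ! 0)))) =
          (\<lambda>t g. g \<in> K (hd t)) (take 1 w) (drop 1 w)"
          unfolding w K_def by simp
      qed
      then show ?thesis unfolding defn_def S_def .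
    qed
    have fib: "fam_fibre p S t = {g. length g = p \<and> length t = 1 \<and> g \<in> K (hd t)}" for t
      unfolding S_def using fam_fibre_R[of p 1 "\<lambda>t g. g \<in> K (hd t)" t] by simp
    have fib2: "fam_fibre p S [e] = K e" for e
      unfolding fib using KG lenG by auto
    have idx: "fam_index 1 S = {t. length t = 1 \<and> (\<exists>g. length g = p \<and> g \<in> K (hd t))}"
      unfolding S_def using fam_index_R[of 1 p "\<lambda>t g. g \<in> K (hd t)"] by simp
    have idx2: "[e] \<in> fam_index 1 S" if "0 < e" for e
      unfolding idx using Kne[OF that] KG lenG by auto
    have idx3: "t \<in> fam_index 1 S \<Longrightarrow> \<exists>e. t = [e] \<and> K e \<noteq> {}" for t
      unfolding idx by (cases t) auto
    obtain e0 :: 'm where e0: "0 < e0" using gt_ex by blast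
    have "(\<Inter>t\<in>fam_index 1 S. fam_fibre p S t) \<noteq> {}"
    proof -
      have dc: "\<forall>k. \<forall>F\<in>D (k + p).
        fam_index k F \<noteq> {} \<and>
        (\<forall>t\<in>fam_index k F. fam_fibre p F t \<subseteq> carrier G \<and> metric_open (carrier G) dG (carrier G - fam_fibre p F t)) \<and>
        (\<forall>t1\<in>fam_index k F. \<forall>t2\<in>fam_index k F. \<exists>t3\<in>fam_index k F.
            fam_fibre p F t3 \<subseteq> fam_fibre p F t1 \<inter> fam_fibre p F t2)
        \<longrightarrow> (\<Inter>t\<in>fam_index k F. fam_fibre p F t) \<noteq> {}"
        using Gc unfolding definably_compact_def .
      have c1: "fam_index 1 S \<noteq> {}" using idx2[OF e0] by blast
      have c2: "\<forall>t\<in>fam_index 1 S. fam_fibre p S t \<subseteq> carrier G \<and> metric_open (carrier G) dG (carrier G - fam_fibre p S t)"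
      proof
        fix t assume "t \<in> fam_index 1 S"
        then obtain e where t: "t = [e]" using idx3 by blast
        show "fam_fibre p S t \<subseteq> carrier G \<and> metric_open (carrier G) dG (carrier G - fam_fibre p S t)"
          unfolding t fib2 using KG K_closed[of C x e] unfolding K_def by blast
      qed
      have c3: "\<forall>t1\<in>fam_index 1 S. \<forall>t2\<in>fam_index 1 S. \<exists>t3\<in>fam_index 1 S.
            fam_fibre p S t3 \<subseteq> fam_fibre p S t1 \<inter> fam_fibre p S t2"
      proof (intro ballI)
        fix t1 t2 assume t1: "t1 \<in> fam_index 1 S" and t2: "t2 \<in> fam_index 1 S"
        obtain e1 where e1: "t1 = [e1]" "K e1 \<noteq> {}" using idx3[OF t1] by blast
        obtain e2 where e2: "t2 = [e2]" "K e2 \<noteq> {}" using idx3[OF t2] by blast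
        have ne: "K (min e1 e2) \<noteq> {}" using e1 e2 by (cases "e1 \<le> e2") (auto simp: min_def)
        have "[min e1 e2] \<in> fam_index 1 S" unfolding idx using ne KG lenG by auto
        moreover have "K (min e1 e2) \<subseteq> K e1 \<inter> K e2" using Kmono by auto
        ultimately show "\<exists>t3\<in>fam_index 1 S. fam_fibre p S t3 \<subseteq> fam_fibre p S t1 \<inter> fam_fibre p S t2"
          unfolding e1 e2 fib2 by (metis fib2)
      qed
      show ?thesis using dc SD c1 c2 c3 by blast
    qed
    then obtain g0 where g0: "\<forall>t\<in>fam_index 1 S. g0 \<in> fam_fibre p S t" by blast
    have g0K: "g0 \<in> K e" if "0 < e" for e using g0 idx2[OF that] fib2 by blast
    have g0G: "g0 \<in> carrier G" using g0K[OF e0] KG by blast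
    define y0 where "y0 = act (inv\<^bsub>G\<^esub> g0) x"
    have y0X: "y0 \<in> X" unfolding y0_def using act_closed[OF Gi[OF g0G] x] .
    have y0C: "y0 \<in> C"
    proof (rule ccontr)
      assume "y0 \<notin> C"
      then have "y0 \<in> X - C" using y0X by blast
      then obtain \<epsilon> where eps: "\<epsilon> > 0" "{y \<in> X. dX y0 y < \<epsilon>} \<subseteq> X - C"
        using Co unfolding metric_open_def by blast
      obtain \<delta>1 where d1: "\<delta>1 > 0" "\<forall>g'\<in>carrier G. \<forall>x'\<in>X.
        dG (inv\<^bsub>G\<^esub> g0) g' < \<delta>1 \<and> dX x x' < \<delta>1 \<longrightarrow> dX (act (inv\<^bsub>G\<^esub> g0) x) (act g' x') < \<epsilon>"
        using act_cont Gi[OF g0G] x eps(1) by blast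
      obtain \<delta>2 where d2: "\<delta>2 > 0" "\<forall>g'\<in>carrier G. dG g0 g' < \<delta>2 \<longrightarrow> dG (inv\<^bsub>G\<^esub> g0) (inv\<^bsub>G\<^esub> g') < \<delta>1"
        using inv_cont g0G d1(1) by blast
      have dpos: "0 < min \<delta>1 \<delta>2" using d1 d2 by simp
      obtain g' c where gc: "g' \<in> carrier G" "dG g0 g' < min \<delta>1 \<delta>2" "c \<in> C" "dX x (act g' c) < min \<delta>1 \<delta>2"
        using g0K[OF dpos] dpos unfolding K_def by blast
      have cX: "c \<in> X" using gc CX by blast
      have "dG (inv\<^bsub>G\<^esub> g0) (inv\<^bsub>G\<^esub> g') < \<delta>1" using d2 gc by simp
      moreover have "dX x (act g' c) < \<delta>1" using gc by simp
      ultimately have "dX (act (inv\<^bsub>G\<^esub> g0) x) (act (inv\<^bsub>G\<^esub> g') (act g' c)) < \<epsilon>"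
        using d1(2) Gi[OF gc(1)] act_closed[OF gc(1) cX] by blast
      then have "dX y0 c < \<epsilon>" unfolding y0_def using act_inv[OF gc(1) cX] by simp
      then have "c \<in> X - C" using eps(2) cX by blast
      then show False using gc by blast
    qed
    have "x = act g0 y0" unfolding y0_def using act_inv2[OF g0G x] by simp
    then have "pi y0 = pi x" using pi_eq[OF y0X x] g0G by blast
    then show False using npc y0C image_eqI[of "pi x" pi y0 C] by simp
  qed
qed

lemma PRE_defn:
  assumes F: "F \<in> D (k + n)"
  shows "defn D (k + n) (\<lambda>w. drop k w \<in> X \<and> take k w @ pi (drop k w) \<in> F)"
proof -
  let ?Ga = "{x @ y @ act x y | x y. x \<in> carrier G \<and> y \<in> X}"
  define AT where "AT = (\<lambda>v. take n (drop (k+n) v) \<in> Q \<and>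
      (take p (drop (k+n+n) v) @ take n (drop k v) @ take n (drop (k+n) v) \<in> ?Ga) \<and>
      (take k (drop 0 v) @ take n (drop (k+n) v) \<in> F))"
  have A: "defn D (k+n+n+p) AT" unfolding AT_def
    by (intro defn_and blk1[OF defn_set[OF Q_D]] blk3[OF defn_set[OF Ga_D]] blk2[OF defn_set[OF F]]) simp_all
  note B = ex[OF ex[OF A]]
  have AT_eval: "AT ((w @ q) @ g) = (q \<in> Q \<and> (g @ drop k w @ q \<in> ?Ga) \<and> take k w @ q \<in> F)"
    if l: "length w = k + n" "length q = n" "length g = p" for w q g :: "'m list"
  proof -
    have "take n (drop (k+n) ((w @ q) @ g)) = q" "take p (drop (k+n+n) ((w @ q) @ g)) = g"
      "take n (drop k ((w @ q) @ g)) = drop k w" "take k (drop 0 ((w @ q) @ g)) = take k w"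
      using l by simp_all
    then show ?thesis unfolding AT_def by (simp only:)
  qed
  show ?thesis
  proof (rule defn_cong2[OF B], intro allI impI)
    fix w :: "'m list" assume lw: "length w = k + n"
    have ld: "length (drop k w) = n" using lw by simp
    show "(\<exists>q. length q = n \<and> (\<exists>g. length g = p \<and> AT ((w @ q) @ g))) =
      (drop k w \<in> X \<and> take k w @ pi (drop k w) \<in> F)"
    proof
      assume "\<exists>q. length q = n \<and> (\<exists>g. length g = p \<and> AT ((w @ q) @ g))"
      then obtain q g where l: "length q = n" "length g = p" and at: "AT ((w @ q) @ g)" by blast
      have e: "q \<in> Q" "g @ drop k w @ q \<in> ?Ga" "take k w @ q \<in> F" using at AT_eval[OF lw l] by simp_all
      then have g: "g \<in> carrier G" "drop k w \<in> X" "q = act g (drop k w)" using Ga_mem[OF l(2) ld] by simp_all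
      then have "pi (drop k w) = q" using pi_char[OF g(2)] e(1) by auto
      then show "drop k w \<in> X \<and> take k w @ pi (drop k w) \<in> F" using g e by simp
    next
      assume h: "drop k w \<in> X \<and> take k w @ pi (drop k w) \<in> F"
      obtain g where g: "g \<in> carrier G" "act g (drop k w) = pi (drop k w)"
        using pi_char[of "drop k w" "pi (drop k w)"] h by auto
      have l: "length (pi (drop k w)) = n" "length g = p"
        using lenX Q_X pi_in_Q h lenG g by auto
      have m: "g @ drop k w @ pi (drop k w) \<in> ?Ga"
        by (subst Ga_mem[OF l(2) ld]) (use g h in simp)
      have "AT ((w @ pi (drop k w)) @ g)" unfolding AT_eval[OF lw l]
        using m h pi_in_Q by simp
      then show "\<exists>q. length q = n \<and> (\<exists>g. length g = p \<and> AT ((w @ q) @ g))" using l by blast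
    qed
  qed
qed

lemma IMG_defn:
  assumes F: "F \<in> D (k + n)"
  shows "defn D (k + n) (\<lambda>w. \<exists>x. length x = n \<and> take k w @ x \<in> F \<and> x \<in> X \<and> drop k w = pi x)"
proof -
  let ?Ga = "{x @ y @ act x y | x y. x \<in> carrier G \<and> y \<in> X}"
  define AT where "AT = (\<lambda>v. (take k (drop 0 v) @ take n (drop (k+n) v) \<in> F) \<and> take n (drop k v) \<in> Q \<and>
      (take p (drop (k+n+n) v) @ take n (drop (k+n) v) @ take n (drop k v) \<in> ?Ga))"
  have A: "defn D (k+n+n+p) AT" unfolding AT_def
    by (intro defn_and blk1[OF defn_set[OF Q_D]] blk3[OF defn_set[OF Ga_D]] blk2[OF defn_set[OF F]]) simp_all
  note B = ex[OF ex[OF A]]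
  have AT_eval: "AT ((w @ x) @ g) = (take k w @ x \<in> F \<and> drop k w \<in> Q \<and> (g @ x @ drop k w \<in> ?Ga))"
    if l: "length w = k + n" "length x = n" "length g = p" for w x g :: "'m list"
  proof -
    have "take n (drop (k+n) ((w @ x) @ g)) = x" "take p (drop (k+n+n) ((w @ x) @ g)) = g"
      "take n (drop k ((w @ x) @ g)) = drop k w" "take k (drop 0 ((w @ x) @ g)) = take k w"
      using l by simp_all
    then show ?thesis unfolding AT_def by (simp only:)
  qed
  show ?thesis
  proof (rule defn_cong2[OF B], intro allI impI)
    fix w :: "'m list" assume lw: "length w = k + n"
    have ld: "length (drop k w) = n" using lw by simp
    show "(\<exists>x. length x = n \<and> (\<exists>g. length g = p \<and> AT ((w @ x) @ g))) =
      (\<exists>x. length x = n \<and> take k w @ x \<in> F \<and> x \<in> X \<and> drop k w = pi x)"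
    proof
      assume "\<exists>x. length x = n \<and> (\<exists>g. length g = p \<and> AT ((w @ x) @ g))"
      then obtain x g where l: "length x = n" "length g = p" and at: "AT ((w @ x) @ g)" by blast
      have e: "take k w @ x \<in> F" "drop k w \<in> Q" "g @ x @ drop k w \<in> ?Ga" using at AT_eval[OF lw l] by simp_all
      then have g: "g \<in> carrier G" "x \<in> X" "drop k w = act g x" using Ga_mem[OF l(2) l(1)] by simp_all
      then have "pi x = drop k w" using pi_char[OF g(2)] e(2) by auto
      then show "\<exists>x. length x = n \<and> take k w @ x \<in> F \<and> x \<in> X \<and> drop k w = pi x" using g e l by auto
    next
      assume "\<exists>x. length x = n \<and> take k w @ x \<in> F \<and> x \<in> X \<and> drop k w = pi x"
      then obtain x where h: "length x = n" "take k w @ x \<in> F" "x \<in> X" "drop k w = pi x" by blast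
      obtain g where g: "g \<in> carrier G" "act g x = pi x"
        using pi_char[of x "pi x"] h by auto
      have l: "length x = n" "length g = p" using h lenG g by auto
      have m: "g @ x @ drop k w \<in> ?Ga"
        by (subst Ga_mem[OF l(2) l(1)]) (use g h in simp)
      have "AT ((w @ x) @ g)" unfolding AT_eval[OF lw l]
        using m h pi_in_Q by simp
      then show "\<exists>x. length x = n \<and> (\<exists>g. length g = p \<and> AT ((w @ x) @ g))" using l by blast
    qed
  qed
qed

lemma ORB_defn:
  assumes F: "F \<in> D (k + n)" and q: "q \<in> X"
  shows "defn D (k + p) (\<lambda>w. drop k w \<in> carrier G \<and> take k w @ act (drop k w) q \<in> F)"
proof -
  let ?Ga = "{x @ y @ act x y | x y. x \<in> carrier G \<and> y \<in> X}"
  define AT where "AT = (\<lambda>v. take n (drop (k+p) v) = q \<and>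
      (take p (drop k v) @ take n (drop (k+p) v) @ take n (drop (k+p+n) v) \<in> ?Ga) \<and>
      (take k (drop 0 v) @ take n (drop (k+p+n) v) \<in> F))"
  have A: "defn D (k+p+n+n) AT" unfolding AT_def
    by (intro defn_and blk_const blk3[OF defn_set[OF Ga_D]] blk2[OF defn_set[OF F]]) (simp_all add: lenX[OF q])
  note B = ex[OF ex[OF A]]
  have AT_eval: "AT ((w @ qq) @ u) = (qq = q \<and> (drop k w @ qq @ u \<in> ?Ga) \<and> take k w @ u \<in> F)"
    if l: "length w = k + p" "length qq = n" "length u = n" for w qq u :: "'m list"
  proof -
    have "take n (drop (k+p) ((w @ qq) @ u)) = qq" "take p (drop k ((w @ qq) @ u)) = drop k w"
      "take n (drop (k+p+n) ((w @ qq) @ u)) = u" "take k (drop 0 ((w @ qq) @ u)) = take k w"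
      using l by simp_all
    then show ?thesis unfolding AT_def by (simp only:)
  qed
  show ?thesis
  proof (rule defn_cong2[OF B], intro allI impI)
    fix w :: "'m list" assume lw: "length w = k + p"
    have ld: "length (drop k w) = p" using lw by simp
    show "(\<exists>qq. length qq = n \<and> (\<exists>u. length u = n \<and> AT ((w @ qq) @ u))) =
      (drop k w \<in> carrier G \<and> take k w @ act (drop k w) q \<in> F)"
    proof
      assume "\<exists>qq. length qq = n \<and> (\<exists>u. length u = n \<and> AT ((w @ qq) @ u))"
      then obtain qq u where l: "length qq = n" "length u = n" and at: "AT ((w @ qq) @ u)" by blast
      have e: "qq = q" "drop k w @ qq @ u \<in> ?Ga" "take k w @ u \<in> F" using at unfolding AT_eval[OF lw l] by blast+
      then have "drop k w \<in> carrier G" "u = act (drop k w) q" using Ga_mem[OF ld l(1), of u] by simp_all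
      then show "drop k w \<in> carrier G \<and> take k w @ act (drop k w) q \<in> F" using e by simp
    next
      assume h: "drop k w \<in> carrier G \<and> take k w @ act (drop k w) q \<in> F"
      have l: "length q = n" "length (act (drop k w) q) = n" using lenX q act_closed h by auto
      have m: "drop k w @ q @ act (drop k w) q \<in> ?Ga"
        by (subst Ga_mem[OF ld l(1)]) (use h q in simp)
      have "AT ((w @ q) @ act (drop k w) q)" unfolding AT_eval[OF lw l]
        using m h by simp
      then show "\<exists>qq. length qq = n \<and> (\<exists>u. length u = n \<and> AT ((w @ qq) @ u))" using l by blast
    qed
  qed
qed

lemma FIB_D:
  assumes F: "F \<in> D (k + n)" and t: "length t = k"
  shows "fam_fibre n F t \<in> D n"
proof -
  have "defn D n (\<lambda>x. t @ x \<in> F)" using param[of k n "\<lambda>z. z \<in> F" t] defn_set[OF F] t by simp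
  then show ?thesis unfolding defn_def fam_fibre_def .
qed

lemma part2a:
  assumes cX: "definably_compact D n X (metric_open X dX)"
  shows "definably_compact D n Q (quotient_open X dX Q pi)"
  unfolding definably_compact_def
proof (intro allI ballI impI)
  fix k F assume F: "F \<in> D (k + n)"
  assume h: "fam_index k F \<noteq> {} \<and>
        (\<forall>t\<in>fam_index k F. fam_fibre n F t \<subseteq> Q \<and> quotient_open X dX Q pi (Q - fam_fibre n F t)) \<and>
        (\<forall>t1\<in>fam_index k F. \<forall>t2\<in>fam_index k F. \<exists>t3\<in>fam_index k F.
            fam_fibre n F t3 \<subseteq> fam_fibre n F t1 \<inter> fam_fibre n F t2)"
  let ?FF = "fam_fibre n F"
  define S where "S = {w. length w = k + n \<and> (\<lambda>t x. x \<in> X \<and> t @ pi x \<in> F) (take k w) (drop k w)}"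
  have SD: "S \<in> D (k + n)"
    using PRE_defn[OF F] unfolding defn_def S_def by simp
  have fib: "fam_fibre n S t = {x. length x = n \<and> length t = k \<and> x \<in> X \<and> t @ pi x \<in> F}" for t
    unfolding S_def using fam_fibre_R[of n k "\<lambda>t x. x \<in> X \<and> t @ pi x \<in> F" t] by simp
  have idxS: "fam_index k S = {t. length t = k \<and> (\<exists>x. length x = n \<and> x \<in> X \<and> t @ pi x \<in> F)}"
    unfolding S_def using fam_index_R[of k n "\<lambda>t x. x \<in> X \<and> t @ pi x \<in> F"] by simp
  have lenF: "length t = k" if "t \<in> fam_index k F" for t using that unfolding fam_index_def by blast
  have fib2: "fam_fibre n S t = {x \<in> X. pi x \<in> ?FF t}" if "t \<in> fam_index k F" for t
    unfolding fib using lenF[OF that] lenX pi_in_Q Q_X by (auto simp: fam_fibre_def)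
  have idx: "fam_index k S = fam_index k F"
  proof
    show "fam_index k S \<subseteq> fam_index k F" unfolding idxS by (auto simp: fam_index_def)
    show "fam_index k F \<subseteq> fam_index k S"
    proof
      fix t assume t: "t \<in> fam_index k F"
      then obtain y where y: "t @ y \<in> F" unfolding fam_index_def by blast
      have ly: "length y = n" using D_sub[OF F y] lenF[OF t] by simp
      have "y \<in> ?FF t" unfolding fam_fibre_def using y ly by simp
      then have yQ: "y \<in> Q" using h t by blast
      then have "y \<in> X" "pi y = y" using Q_X pi_Q by auto
      then show "t \<in> fam_index k S" unfolding idxS using lenF[OF t] ly y by auto
    qed
  qed
  have dc: "\<forall>k. \<forall>F\<in>D (k + n).
        fam_index k F \<noteq> {} \<and>
        (\<forall>t\<in>fam_index k F. fam_fibre n F t \<subseteq> X \<and> metric_open X dX (X - fam_fibre n F t)) \<and>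
        (\<forall>t1\<in>fam_index k F. \<forall>t2\<in>fam_index k F. \<exists>t3\<in>fam_index k F.
            fam_fibre n F t3 \<subseteq> fam_fibre n F t1 \<inter> fam_fibre n F t2)
        \<longrightarrow> (\<Inter>t\<in>fam_index k F. fam_fibre n F t) \<noteq> {}"
    using cX unfolding definably_compact_def .
  have c1: "fam_index k S \<noteq> {}" using idx h by simp
  have c2: "\<forall>t\<in>fam_index k S. fam_fibre n S t \<subseteq> X \<and> metric_open X dX (X - fam_fibre n S t)"
  proof
    fix t assume "t \<in> fam_index k S"
    then have t: "t \<in> fam_index k F" using idx by simp
    have "X - fam_fibre n S t = {x \<in> X. pi x \<in> Q - ?FF t}" unfolding fib2[OF t] using pi_in_Q by auto
    moreover have "quotient_open X dX Q pi (Q - ?FF t)" using h t by blast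
    ultimately show "fam_fibre n S t \<subseteq> X \<and> metric_open X dX (X - fam_fibre n S t)"
      unfolding quotient_open_def fib2[OF t] by auto
  qed
  have c3: "\<forall>t1\<in>fam_index k S. \<forall>t2\<in>fam_index k S. \<exists>t3\<in>fam_index k S.
            fam_fibre n S t3 \<subseteq> fam_fibre n S t1 \<inter> fam_fibre n S t2"
  proof (intro ballI)
    fix t1 t2 assume "t1 \<in> fam_index k S" "t2 \<in> fam_index k S"
    then have t: "t1 \<in> fam_index k F" "t2 \<in> fam_index k F" using idx by auto
    then obtain t3 where t3: "t3 \<in> fam_index k F" "?FF t3 \<subseteq> ?FF t1 \<inter> ?FF t2" using h by blast
    then show "\<exists>t3\<in>fam_index k S. fam_fibre n S t3 \<subseteq> fam_fibre n S t1 \<inter> fam_fibre n S t2"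
      unfolding idx using fib2 t by (intro bexI[of _ t3]) auto
  qed
  have "(\<Inter>t\<in>fam_index k S. fam_fibre n S t) \<noteq> {}" using dc SD c1 c2 c3 by blast
  then obtain x0 where x0: "\<forall>t\<in>fam_index k S. x0 \<in> fam_fibre n S t" by blast
  have "\<forall>t\<in>fam_index k F. pi x0 \<in> ?FF t" using x0 fib2 idx by auto
  then show "(\<Inter>t\<in>fam_index k F. fam_fibre n F t) \<noteq> {}" by blast
qed

lemma part2b:
  assumes cQ: "definably_compact D n Q (quotient_open X dX Q pi)"
  shows "definably_compact D n X (metric_open X dX)"
  unfolding definably_compact_def
proof (intro allI ballI impI)
  fix k F assume F: "F \<in> D (k + n)"
  assume h: "fam_index k F \<noteq> {} \<and>
        (\<forall>t\<in>fam_index k F. fam_fibre n F t \<subseteq> X \<and> metric_open X dX (X - fam_fibre n F t)) \<and>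
        (\<forall>t1\<in>fam_index k F. \<forall>t2\<in>fam_index k F. \<exists>t3\<in>fam_index k F.
            fam_fibre n F t3 \<subseteq> fam_fibre n F t1 \<inter> fam_fibre n F t2)"
  let ?FF = "fam_fibre n F"
  have lenF: "length t = k" if "t \<in> fam_index k F" for t using that unfolding fam_index_def by blast
  have FFX: "?FF t \<subseteq> X" if "t \<in> fam_index k F" for t using h that by blast
  have FFne: "\<exists>y. y \<in> ?FF t" if t: "t \<in> fam_index k F" for t
  proof -
    obtain y where y: "t @ y \<in> F" using t unfolding fam_index_def by blast
    have ly: "length y = n" using D_sub[OF F y] lenF[OF t] by simp
    then show ?thesis unfolding fam_fibre_def using y by blast
  qed
  define P where "P = {w. length w = k + n \<and> (\<lambda>t q. \<exists>x. length x = n \<and> t @ x \<in> F \<and> x \<in> X \<and> q = pi x) (take k w) (drop k w)}"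
  have PD: "P \<in> D (k + n)"
    using IMG_defn[OF F] unfolding defn_def P_def by simp
  have fibP: "fam_fibre n P t = {q. length q = n \<and> length t = k \<and> (\<exists>x. length x = n \<and> t @ x \<in> F \<and> x \<in> X \<and> q = pi x)}" for t
    unfolding P_def using fam_fibre_R[of n k "\<lambda>t q. \<exists>x. length x = n \<and> t @ x \<in> F \<and> x \<in> X \<and> q = pi x" t] by simp
  have idxP: "fam_index k P = {t. length t = k \<and> (\<exists>q. length q = n \<and> (\<exists>x. length x = n \<and> t @ x \<in> F \<and> x \<in> X \<and> q = pi x))}"
    unfolding P_def using fam_index_R[of k n "\<lambda>t q. \<exists>x. length x = n \<and> t @ x \<in> F \<and> x \<in> X \<and> q = pi x"] by simp
  have fibP2: "fam_fibre n P t = pi ` ?FF t" if t: "t \<in> fam_index k F" for t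
  proof
    show "fam_fibre n P t \<subseteq> pi ` ?FF t" unfolding fibP by (auto simp: fam_fibre_def)
    show "pi ` ?FF t \<subseteq> fam_fibre n P t"
    proof
      fix q assume "q \<in> pi ` ?FF t"
      then obtain x where x: "x \<in> ?FF t" "q = pi x" by blast
      have xX: "x \<in> X" using x FFX[OF t] by blast
      have "length q = n" using x(2) pi_in_Q[OF xX] Q_X lenX by blast
      then show "q \<in> fam_fibre n P t" unfolding fibP using x xX lenF[OF t] unfolding fam_fibre_def by blast
    qed
  qed
  have idxP2: "fam_index k P = fam_index k F"
  proof
    show "fam_index k P \<subseteq> fam_index k F" unfolding idxP by (auto simp: fam_index_def)
    show "fam_index k F \<subseteq> fam_index k P"
    proof
      fix t assume t: "t \<in> fam_index k F"
      obtain y where y: "y \<in> ?FF t" using FFne[OF t] by blast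
      have yX: "y \<in> X" using y FFX[OF t] by blast
      have "length (pi y) = n" using pi_in_Q[OF yX] Q_X lenX by blast
      then show "t \<in> fam_index k P" unfolding idxP using y yX lenF[OF t] unfolding fam_fibre_def by blast
    qed
  qed
  have dcQ: "\<forall>k. \<forall>F\<in>D (k + n).
        fam_index k F \<noteq> {} \<and>
        (\<forall>t\<in>fam_index k F. fam_fibre n F t \<subseteq> Q \<and> quotient_open X dX Q pi (Q - fam_fibre n F t)) \<and>
        (\<forall>t1\<in>fam_index k F. \<forall>t2\<in>fam_index k F. \<exists>t3\<in>fam_index k F.
            fam_fibre n F t3 \<subseteq> fam_fibre n F t1 \<inter> fam_fibre n F t2)
        \<longrightarrow> (\<Inter>t\<in>fam_index k F. fam_fibre n F t) \<noteq> {}"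
    using cQ unfolding definably_compact_def .
  have "(\<Inter>t\<in>fam_index k P. fam_fibre n P t) \<noteq> {}"
  proof -
    have c1: "fam_index k P \<noteq> {}" using idxP2 h by simp
    have c2: "\<forall>t\<in>fam_index k P. fam_fibre n P t \<subseteq> Q \<and> quotient_open X dX Q pi (Q - fam_fibre n P t)"
    proof
      fix t assume "t \<in> fam_index k P"
      then have t: "t \<in> fam_index k F" using idxP2 by simp
      have "quotient_open X dX Q pi (Q - pi ` ?FF t)"
        using part1[OF FIB_D[OF F lenF[OF t]] FFX[OF t]] h t by blast
      moreover have "pi ` ?FF t \<subseteq> Q" using FFX[OF t] pi_in_Q by blast
      ultimately show "fam_fibre n P t \<subseteq> Q \<and> quotient_open X dX Q pi (Q - fam_fibre n P t)"
        unfolding fibP2[OF t] by blast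
    qed
    have c3: "\<forall>t1\<in>fam_index k P. \<forall>t2\<in>fam_index k P. \<exists>t3\<in>fam_index k P.
            fam_fibre n P t3 \<subseteq> fam_fibre n P t1 \<inter> fam_fibre n P t2"
    proof (intro ballI)
      fix t1 t2 assume "t1 \<in> fam_index k P" "t2 \<in> fam_index k P"
      then have t: "t1 \<in> fam_index k F" "t2 \<in> fam_index k F" using idxP2 by auto
      then obtain t3 where t3: "t3 \<in> fam_index k F" "?FF t3 \<subseteq> ?FF t1 \<inter> ?FF t2" using h by blast
      then show "\<exists>t3\<in>fam_index k P. fam_fibre n P t3 \<subseteq> fam_fibre n P t1 \<inter> fam_fibre n P t2"
        unfolding idxP2 using fibP2 t by (intro bexI[of _ t3]) auto
    qed
    show ?thesis using dcQ PD c1 c2 c3 by blast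
  qed
  then obtain q0 where q0: "\<forall>t\<in>fam_index k P. q0 \<in> fam_fibre n P t" by blast
  have q0img: "q0 \<in> pi ` ?FF t" if "t \<in> fam_index k F" for t using q0 fibP2[OF that] idxP2 that by auto
  obtain t0 where t0: "t0 \<in> fam_index k F" using h by blast
  have q0Q: "q0 \<in> Q" using q0img[OF t0] FFX[OF t0] pi_in_Q by blast
  have q0X: "q0 \<in> X" using q0Q Q_X by blast
  define H where "H = {w. length w = k + p \<and> (\<lambda>t g. g \<in> carrier G \<and> t @ act g q0 \<in> F) (take k w) (drop k w)}"
  have HD: "H \<in> D (k + p)"
    using ORB_defn[OF F q0X] unfolding defn_def H_def by simp
  have fibH: "fam_fibre p H t = {g. length g = p \<and> length t = k \<and> g \<in> carrier G \<and> t @ act g q0 \<in> F}" for t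
    unfolding H_def using fam_fibre_R[of p k "\<lambda>t g. g \<in> carrier G \<and> t @ act g q0 \<in> F" t] by simp
  have idxH: "fam_index k H = {t. length t = k \<and> (\<exists>g. length g = p \<and> g \<in> carrier G \<and> t @ act g q0 \<in> F)}"
    unfolding H_def using fam_index_R[of k p "\<lambda>t g. g \<in> carrier G \<and> t @ act g q0 \<in> F"] by simp
  have fibH2: "fam_fibre p H t = {g \<in> carrier G. act g q0 \<in> ?FF t}" if t: "t \<in> fam_index k F" for t
    unfolding fibH using lenF[OF t] lenG lenX act_closed[OF _ q0X] by (auto simp: fam_fibre_def)
  have idxH2: "fam_index k H = fam_index k F"
  proof
    show "fam_index k H \<subseteq> fam_index k F" unfolding idxH by (auto simp: fam_index_def)
    show "fam_index k F \<subseteq> fam_index k H"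
    proof
      fix t assume t: "t \<in> fam_index k F"
      obtain x where x: "x \<in> ?FF t" "q0 = pi x" using q0img[OF t] by blast
      have xX: "x \<in> X" using x FFX[OF t] by blast
      have "pi q0 = pi x" using x pi_Q[OF q0Q] by simp
      then obtain g where g: "g \<in> carrier G" "x = act g q0" using pi_eq[OF q0X xX] by blast
      show "t \<in> fam_index k H" unfolding idxH using g x lenF[OF t] lenG[OF g(1)] unfolding fam_fibre_def by auto
    qed
  qed
  have dcG: "\<forall>k. \<forall>F\<in>D (k + p).
        fam_index k F \<noteq> {} \<and>
        (\<forall>t\<in>fam_index k F. fam_fibre p F t \<subseteq> carrier G \<and> metric_open (carrier G) dG (carrier G - fam_fibre p F t)) \<and>
        (\<forall>t1\<in>fam_index k F. \<forall>t2\<in>fam_index k F. \<exists>t3\<in>fam_index k F.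
            fam_fibre p F t3 \<subseteq> fam_fibre p F t1 \<inter> fam_fibre p F t2)
        \<longrightarrow> (\<Inter>t\<in>fam_index k F. fam_fibre p F t) \<noteq> {}"
    using Gc unfolding definably_compact_def .
  have "(\<Inter>t\<in>fam_index k H. fam_fibre p H t) \<noteq> {}"
  proof -
    have c1: "fam_index k H \<noteq> {}" using idxH2 h by simp
    have c2: "\<forall>t\<in>fam_index k H. fam_fibre p H t \<subseteq> carrier G \<and> metric_open (carrier G) dG (carrier G - fam_fibre p H t)"
    proof
      fix t assume "t \<in> fam_index k H"
      then have t: "t \<in> fam_index k F" using idxH2 by simp
      have Fo: "metric_open X dX (X - ?FF t)" using h t by blast
      have "metric_open (carrier G) dG (carrier G - {g \<in> carrier G. act g q0 \<in> ?FF t})"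
        unfolding metric_open_def
      proof (intro conjI ballI)
        show "carrier G - {g \<in> carrier G. act g q0 \<in> ?FF t} \<subseteq> carrier G" by blast
        fix g assume g: "g \<in> carrier G - {g \<in> carrier G. act g q0 \<in> ?FF t}"
        then have gG: "g \<in> carrier G" and "act g q0 \<in> X - ?FF t" using act_closed[OF _ q0X] by auto
        then obtain \<epsilon> where eps: "\<epsilon> > 0" "{y \<in> X. dX (act g q0) y < \<epsilon>} \<subseteq> X - ?FF t"
          using Fo unfolding metric_open_def by blast
        obtain \<delta> where d: "\<delta> > 0" "\<forall>g'\<in>carrier G. \<forall>x'\<in>X.
          dG g g' < \<delta> \<and> dX q0 x' < \<delta> \<longrightarrow> dX (act g q0) (act g' x') < \<epsilon>"
          using act_cont gG q0X eps(1) by blast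
        have dq: "dX q0 q0 = 0" using dX_ax q0X by blast
        show "\<exists>e>0. {y \<in> carrier G. dG g y < e} \<subseteq> carrier G - {g \<in> carrier G. act g q0 \<in> ?FF t}"
        proof (intro exI conjI subsetI)
          show "0 < \<delta>" by fact
          fix h' assume h': "h' \<in> {y \<in> carrier G. dG g y < \<delta>}"
          then have "dX (act g q0) (act h' q0) < \<epsilon>" using d dq q0X by auto
          then have "act h' q0 \<in> X - ?FF t" using eps(2) act_closed[OF _ q0X] h' by blast
          then show "h' \<in> carrier G - {g \<in> carrier G. act g q0 \<in> ?FF t}" using h' by blast
        qed
      qed
      then show "fam_fibre p H t \<subseteq> carrier G \<and> metric_open (carrier G) dG (carrier G - fam_fibre p H t)"
        unfolding fibH2[OF t] by blast
    qed
    have c3: "\<forall>t1\<in>fam_index k H. \<forall>t2\<in>fam_index k H. \<exists>t3\<in>fam_index k H.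
            fam_fibre p H t3 \<subseteq> fam_fibre p H t1 \<inter> fam_fibre p H t2"
    proof (intro ballI)
      fix t1 t2 assume "t1 \<in> fam_index k H" "t2 \<in> fam_index k H"
      then have t: "t1 \<in> fam_index k F" "t2 \<in> fam_index k F" using idxH2 by auto
      then obtain t3 where t3: "t3 \<in> fam_index k F" "?FF t3 \<subseteq> ?FF t1 \<inter> ?FF t2" using h by blast
      then show "\<exists>t3\<in>fam_index k H. fam_fibre p H t3 \<subseteq> fam_fibre p H t1 \<inter> fam_fibre p H t2"
        unfolding idxH2 using fibH2 t by (intro bexI[of _ t3]) auto
    qed
    show ?thesis using dcG HD c1 c2 c3 by blast
  qed
  then obtain g0 where g0: "\<forall>t\<in>fam_index k H. g0 \<in> fam_fibre p H t" by blast
  have "\<forall>t\<in>fam_index k F. act g0 q0 \<in> ?FF t" using g0 fibH2 idxH2 by auto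
  then show "(\<Inter>t\<in>fam_index k F. fam_fibre n F t) \<noteq> {}" by blast
qed

end

theorem proposition5p9:
  fixes D :: "nat \<Rightarrow> ('m::{linordered_ab_group_add, dense_linorder, no_top, no_bot}) list set set"
    and G :: "'m list monoid" and dG :: "'m list \<Rightarrow> 'm list \<Rightarrow> 'm"
    and X :: "'m list set" and dX :: "'m list \<Rightarrow> 'm list \<Rightarrow> 'm"
    and act :: "'m list \<Rightarrow> 'm list \<Rightarrow> 'm list"
    and Q :: "'m list set" and pi :: "'m list \<Rightarrow> 'm list"
    and p n :: nat
  assumes "expansion_of_ogroup D"
    and "locally_o_minimal D"
    and "definably_complete D"
    and "definable_metric_group D p G dG"
    and "definably_compact D p (carrier G) (metric_open (carrier G) dG)"
    and "definable_metric D n X dX"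
    and "definable_continuous_action D p n G dG X dX act"
    and "definable_quotient D n G X dX act Q pi"
  shows "(\<forall>C\<in>D n. C \<subseteq> X \<and> metric_open X dX (X - C) \<longrightarrow>
            quotient_open X dX Q pi (Q - pi ` C))
         \<and> (definably_compact D n X (metric_open X dX)
              \<longleftrightarrow> definably_compact D n Q (quotient_open X dX Q pi))"
proof -
  interpret setting D G dG X dX act Q pi p n
    using assms unfolding setting_def EOG_def setting_axioms_def by blast
  show ?thesis using part1 part2a part2b by blast
qed

end
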